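(* Let $\mu$ be a Borel probability measure on $[0,1]$. (1) There is a constant $c$ independent of $N$ such that for every $N\in\mathbb{N}$ there exist points $x_1,\dots,x_N\in[0,1]$ with $D^*_N\big(\mu;\frac1N\sum_{i=1}^N\delta_{x_i}\big)\leq \frac{c}{N}$. (2) There exist a sequence $(x_k)_{k\in\mathbb{N}}\subseteq[0,1]$ and a constant $c$ independent of $N$ such that for all integers $N\geq2$, $D^*_N\big(\mu;\frac1N\sum_{i=1}^N\delta_{x_i}\big)\leq c\frac{\log N}{N}$. (3) Suppose $\mu$ has no point masses (i.e. $\mu(\{x\})=0$ for all $x\in[0,1]$). Then for every $N$ and every finite set $x_1,\dots,x_N\in[0,1]$, $D^*_N\big(\mu;\frac1N\sum_{i=1}^N\delta_{x_i}\big)\geq\frac{1}{2N}$. Moreover, there is a constant $c>0$ such that for every sequence $(x_k)_{k\in\mathbb{N}}\subseteq[0,1]$, the inequality $D^*_N\big(\mu;\frac1N\sum_{i=1}^N\delta_{x_i}\big)\geq c\frac{\log N}{N}$ holds for infinitely many $N\in\mathbb{N}$.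
   Context: $\delta_y$ denotes the Dirac measure at $y$. For probability measures $\mu,\nu$ on $[0,1]$, the star-discrepancy is $D^*_N(\mu;\nu)=\sup_{b\in[0,1]}|\mu([0,b))-\nu([0,b))|$ (supremum over half-open intervals anchored at $0$). *)

theory Defs
  imports "HOL-Probability.Probability"
begin

definition star_disc :: "real measure \<Rightarrow> (nat \<Rightarrow> real) \<Rightarrow> nat \<Rightarrow> real" where
  "star_disc M x N =
     (SUP b\<in>{0..1}. \<bar>measure M {0..<b} - real (card {i\<in>{1..N}. x i \<in> {0..<b}}) / real N\<bar>)"

text \<open>Borel probability measure on [0,1] (as a measure on the real line concentrated on [0,1]).\<close>
definition borel_prob_on_unit :: "real measure \<Rightarrow> bool" where
  "borel_prob_on_unit M \<longleftrightarrow> prob_space M \<and> sets M = sets borel \<and> measure M {0..1} = 1"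

end

theory Submission
  imports Defs
begin

lemma sum_blocks:
  fixes F :: "nat \<Rightarrow> real"
  shows "(\<Sum>x<A*W. F x) = (\<Sum>b<A. \<Sum>r<W. F (b*W + r))"
proof (induction A)
  case 0 then show ?case by simp
next
  case (Suc A)
  have "{..<Suc A * W} = {..<A*W} \<union> {A*W..<A*W+W}" by auto
  moreover have "(\<Sum>x\<in>{A*W..<A*W+W}. F x) = (\<Sum>r<W. F (A*W + r))"
  proof -
    have "(\<Sum>x\<in>{A*W..<A*W+W}. F x) = (\<Sum>x\<in>{0+A*W..<W+A*W}. F x)" by (simp add: add.commute)
    also have "\<dots> = (\<Sum>r=0..<W. F (r + A*W))" by (rule sum.shift_bounds_nat_ivl)
    finally show ?thesis by (simp add: atLeast0LessThan add.commute)
  qed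
  ultimately show ?case using Suc by (simp add: sum.union_disjoint ivl_disj_int)
qed

definition H :: "nat \<Rightarrow> nat \<Rightarrow> real" where
  "H h r = (if r < h then 1 else -1)"

lemma sum_split2h:
  fixes F :: "nat \<Rightarrow> real"
  shows "(\<Sum>r<2*h. F r) = (\<Sum>r<h. F r) + (\<Sum>r<h. F (h + r))"
proof -
  have "(\<Sum>r<2*h. F r) = (\<Sum>r<2*h. F r)" by simp
  have e: "{..<2*h} = {..<h} \<union> {h..<h+h}" by auto
  have "(\<Sum>x\<in>{h..<h+h}. F x) = (\<Sum>x\<in>{0+h..<h+h}. F x)" by simp
  also have "\<dots> = (\<Sum>r=0..<h. F (r + h))" by (rule sum.shift_bounds_nat_ivl)
  finally have "(\<Sum>x\<in>{h..<h+h}. F x) = (\<Sum>r<h. F (h + r))" by (simp add: atLeast0LessThan add.commute)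
  then show ?thesis unfolding e by (simp add: sum.union_disjoint ivl_disj_int)
qed

lemma H_sum0: "(\<Sum>r<2*h. H h r) = 0"
  by (simp add: sum_split2h H_def)

lemma H_lin: "(\<Sum>r<2*h. H h r * real (B + r)) = - (real h * real h)"
proof -
  have "(\<Sum>r<2*h. H h r * real (B + r)) = (\<Sum>r<h. real (B + r)) - (\<Sum>r<h. real (B + (h + r)))"
    unfolding sum_split2h[of "\<lambda>r. H h r * real (B + r)"]
    apply (simp add: H_def sum_negf)
    apply (subst sum_negf[symmetric], rule sum.cong, auto)
    done
  also have "\<dots> = (\<Sum>r<h. real (B + r) - real (B + (h + r)))" by (simp only: sum_subtractf)
  also have "\<dots> = (\<Sum>r<h. - real h)" by (rule sum.cong) auto
  finally show ?thesis by simp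
qed

lemma H_thr: assumes "x < B \<or> B + 2*h \<le> x"
  shows "(\<Sum>r<2*h. H h r * (if x < B + r then 1 else 0)) = 0"
proof (cases "x < B")
  case True
  then have "(\<Sum>r<2*h. H h r * (if x < B + r then 1 else 0)) = (\<Sum>r<2*h. H h r)"
    by (intro sum.cong) auto
  then show ?thesis using H_sum0 by simp
next
  case False
  then have "(\<Sum>r<2*h. H h r * (if x < B + r then 1 else 0)) = (\<Sum>r<2*h. 0)"
    using assms by (intro sum.cong) auto
  then show ?thesis by simp
qed


lemma div_pow_mono: fixes x y :: nat
  assumes "x div 2^a = y div 2^a" "a \<le> e" shows "x div 2^e = y div 2^e"
proof -
  have "2^e = (2::nat)^a * 2^(e-a)" using assms(2) by (simp add: power_add[symmetric])
  then show ?thesis using assms(1) by (simp add: div_mult2_eq)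
qed

lemma card_as_sum:
  fixes c :: "nat \<Rightarrow> nat" and n N j :: nat
  assumes "n \<le> N"
  shows "real (card {i. i<n \<and> c i < j}) = (\<Sum>i<N. (if i < n then 1 else 0) * (if c i < j then 1 else 0))"
proof -
  have "{i. i<n \<and> c i < j} = {i\<in>{..<N}. i < n \<and> c i < j}" using assms by (auto intro: less_le_trans)
  then have "real (card {i. i<n \<and> c i < j}) = (\<Sum>i\<in>{i\<in>{..<N}. i < n \<and> c i < j}. 1)" by simp
  also have "\<dots> = (\<Sum>i<N. if i < n \<and> c i < j then 1 else 0)" by (rule sum.inter_filter) simp
  finally show ?thesis by (simp add: if_distrib) (smt (verit) sum.cong)
qed

lemma block_inner:
  fixes c :: "nat \<Rightarrow> nat"
  assumes ht: "ht > 0" and hs: "hs > 0" and N: "N = A*(2*ht)" and bA: "b < A"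
  and emp: "\<forall>i<N. \<not>(i div (2*ht) = b \<and> c i div (2*hs) = s)"
  shows "(\<Sum>r<2*ht. \<Sum>q<2*hs. (real (card {i. i<b*(2*ht)+r \<and> c i < s*(2*hs)+q}) - real (b*(2*ht)+r) * real (s*(2*hs)+q) / G)
            * H ht r * H hs q) = -(real ht * real ht * real hs * real hs / G)"
proof -
  let ?n = "\<lambda>r. b*(2*ht)+r" and ?j = "\<lambda>q. s*(2*hs)+q"
  have nN: "?n r \<le> N" if "r < 2*ht" for r
  proof -
    have "b*(2*ht) + r < b*(2*ht) + 2*ht" using that by simp
    also have "\<dots> = Suc b * (2*ht)" by simp
    also have "\<dots> \<le> A*(2*ht)" using bA by (intro mult_right_mono) auto
    finally show ?thesis using N by simp
  qed
  have cnt: "(\<Sum>r<2*ht. \<Sum>q<2*hs. real (card {i. i<?n r \<and> c i < ?j q}) * H ht r * H hs q) = 0"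
  proof -
    have "(\<Sum>r<2*ht. \<Sum>q<2*hs. real (card {i. i<?n r \<and> c i < ?j q}) * H ht r * H hs q)
       = (\<Sum>r<2*ht. \<Sum>q<2*hs. \<Sum>i<N. ((if i < ?n r then 1 else 0) * H ht r) * ((if c i < ?j q then 1 else 0) * H hs q))"
      by (intro sum.cong refl, subst card_as_sum[OF nN], simp_all add: sum_distrib_right sum_distrib_left mult_ac)
    also have "\<dots> = (\<Sum>i<N. (\<Sum>r<2*ht. H ht r * (if i < ?n r then 1 else 0)) * (\<Sum>q<2*hs. H hs q * (if c i < ?j q then 1 else 0)))"
    proof -
      have "(\<Sum>r<2*ht. \<Sum>q<2*hs. \<Sum>i<N. ((if i < ?n r then 1 else 0) * H ht r) * ((if c i < ?j q then 1 else 0) * H hs q))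
         = (\<Sum>r<2*ht. \<Sum>i<N. \<Sum>q<2*hs. ((if i < ?n r then 1 else 0) * H ht r) * ((if c i < ?j q then 1 else 0) * H hs q))"
        by (rule sum.cong[OF refl], rule sum.swap)
      also have "\<dots> = (\<Sum>i<N. \<Sum>r<2*ht. \<Sum>q<2*hs. ((if i < ?n r then 1 else 0) * H ht r) * ((if c i < ?j q then 1 else 0) * H hs q))"
        by (rule sum.swap)
      also have "\<dots> = (\<Sum>i<N. (\<Sum>r<2*ht. H ht r * (if i < ?n r then 1 else 0)) * (\<Sum>q<2*hs. H hs q * (if c i < ?j q then 1 else 0)))"
        by (simp add: sum_product mult_ac)
      finally show ?thesis .
    qed
    also have "\<dots> = (\<Sum>i<N. 0)"
    proof (rule sum.cong[OF refl])
      fix i assume i: "i \<in> {..<N}"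
      show "(\<Sum>r<2*ht. H ht r * (if i < ?n r then 1 else 0)) * (\<Sum>q<2*hs. H hs q * (if c i < ?j q then 1 else 0)) = 0"
      proof (cases "i div (2*ht) = b")
        case False
        have "i < b*(2*ht) \<or> b*(2*ht) + 2*ht \<le> i"
        proof (rule ccontr)
          assume "\<not> ?thesis"
          then have "b*(2*ht) \<le> i" "i < Suc b*(2*ht)" by auto
          then have "i div (2*ht) = b" using ht by (simp add: div_nat_eqI mult.commute)
          with False show False by simp
        qed
        then show ?thesis using H_thr[of i "b*(2*ht)" ht] by simp
      next
        case True
        then have "c i div (2*hs) \<noteq> s" using emp i by auto
        have "c i < s*(2*hs) \<or> s*(2*hs) + 2*hs \<le> c i"
        proof (rule ccontr)
          assume "\<not> ?thesis"
          then have "s*(2*hs) \<le> c i" "c i < Suc s*(2*hs)" by auto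
          then have "c i div (2*hs) = s" using hs by (simp add: div_nat_eqI mult.commute)
          with \<open>c i div (2*hs) \<noteq> s\<close> show False by simp
        qed
        then show ?thesis using H_thr[of "c i" "s*(2*hs)" hs] by simp
      qed
    qed
    finally show ?thesis by simp
  qed
  have lin: "(\<Sum>r<2*ht. \<Sum>q<2*hs. real (?n r) * real (?j q) / G * H ht r * H hs q) = (real ht * real ht * real hs * real hs / G)"
  proof -
    have "(\<Sum>r<2*ht. \<Sum>q<2*hs. real (?n r) * real (?j q) / G * H ht r * H hs q)
        = (\<Sum>r<2*ht. H ht r * real (?n r)) * (\<Sum>q<2*hs. H hs q * real (?j q)) / G"
      apply (simp add: sum_product sum_divide_distrib mult_ac)
      by (rule sum.swap)
    also have "\<dots> = (real ht * real ht * real hs * real hs / G)"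
    proof -
      have h1: "(\<Sum>r<2*ht. H ht r * real (?n r)) = - (real ht*real ht)" by (rule H_lin)
      have h2: "(\<Sum>q<2*hs. H hs q * real (?j q)) = - (real hs*real hs)" by (rule H_lin)
      show ?thesis by (simp only: h1 h2) simp
    qed
    finally show ?thesis .
  qed
  have "(\<Sum>r<2*ht. \<Sum>q<2*hs. (real (card {i. i<?n r \<and> c i < ?j q}) - real (?n r) * real (?j q) / G) * H ht r * H hs q)
     = (\<Sum>r<2*ht. \<Sum>q<2*hs. real (card {i. i<?n r \<and> c i < ?j q}) * H ht r * H hs q)
       - (\<Sum>r<2*ht. \<Sum>q<2*hs. real (?n r) * real (?j q) / G * H ht r * H hs q)"
    by (simp add: sum_subtractf[symmetric] algebra_simps)
  then show ?thesis using cnt lin by simp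
qed

lemma block_gen:
  fixes c :: "nat \<Rightarrow> nat" and g :: "nat \<Rightarrow> nat \<Rightarrow> real" and G :: real
  assumes ht: "ht > 0" and hs: "hs > 0" and N: "N = A*(2*ht)"
  and gconst: "\<And>n n' j j'. n div (2*ht) = n' div (2*ht) \<Longrightarrow> j div (2*hs) = j' div (2*hs) \<Longrightarrow> g n j = g n' j'"
  and gemp: "\<And>n j i. g n j \<noteq> 0 \<Longrightarrow> i < N \<Longrightarrow> \<not>(i div (2*ht) = n div (2*ht) \<and> c i div (2*hs) = j div (2*hs))"
  shows "(\<Sum>n<N. \<Sum>j<S*(2*hs). (real (card {i. i<n \<and> c i < j}) - real n * real j / G) * g n j * H ht (n mod (2*ht)) * H hs (j mod (2*hs)))
     = -(real ht * real ht * real hs * real hs / G) * (\<Sum>b<A. \<Sum>s<S. g (b*(2*ht)) (s*(2*hs)))"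
proof -
  define F where "F n j = (real (card {i. i<n \<and> c i < j}) - real n * real j / G) * g n j * H ht (n mod (2*ht)) * H hs (j mod (2*hs))" for n j
  define K where "K = -(real ht * real ht * real hs * real hs / G)"
  have "(\<Sum>n<N. \<Sum>j<S*(2*hs). F n j) = (\<Sum>b<A. \<Sum>r<2*ht. \<Sum>s<S. \<Sum>q<2*hs. F (b*(2*ht)+r) (s*(2*hs)+q))"
    unfolding N sum_blocks by simp
  also have "\<dots> = (\<Sum>b<A. \<Sum>s<S. \<Sum>r<2*ht. \<Sum>q<2*hs. F (b*(2*ht)+r) (s*(2*hs)+q))"
    by (rule sum.cong[OF refl], rule sum.swap)
  also have "\<dots> = (\<Sum>b<A. \<Sum>s<S. K * g (b*(2*ht)) (s*(2*hs)))"
  proof (intro sum.cong refl)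
    fix b s assume b: "b \<in> {..<A}" and s: "s \<in> {..<S}"
    let ?g = "g (b*(2*ht)) (s*(2*hs))"
    have gc: "g (b*(2*ht)+r) (s*(2*hs)+q) = ?g" if "r < 2*ht" "q < 2*hs" for r q
      using that ht hs by (intro gconst) simp_all
    have Hr: "H ht ((b*(2*ht)+r) mod (2*ht)) = H ht r" if "r < 2*ht" for r using that by simp
    have Hq: "H hs ((s*(2*hs)+q) mod (2*hs)) = H hs q" if "q < 2*hs" for q using that by simp
    have "(\<Sum>r<2*ht. \<Sum>q<2*hs. F (b*(2*ht)+r) (s*(2*hs)+q))
       = ?g * (\<Sum>r<2*ht. \<Sum>q<2*hs. (real (card {i. i<b*(2*ht)+r \<and> c i < s*(2*hs)+q}) - real (b*(2*ht)+r) * real (s*(2*hs)+q) / G)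
            * H ht r * H hs q)"
      unfolding F_def sum_distrib_left
      by (intro sum.cong refl) (simp only: lessThan_iff gc Hr Hq, simp add: mult_ac)
    also have "\<dots> = K * ?g"
    proof (cases "?g = 0")
      case True then show ?thesis by simp
    next
      case False
      have emp: "\<forall>i<N. \<not>(i div (2*ht) = b \<and> c i div (2*hs) = s)"
        using gemp[OF False] ht hs by simp
      show ?thesis unfolding K_def
        by (subst block_inner[OF ht hs N _ emp]) (use b in simp_all)
    qed
    finally show "(\<Sum>r<2*ht. \<Sum>q<2*hs. F (b*(2*ht)+r) (s*(2*hs)+q)) = K * ?g" .
  qed
  finally show ?thesis unfolding F_def K_def by (simp add: sum_distrib_left)
qed

lemma mod2h_iff: assumes "h > (0::nat)" shows "(x mod (2*h) < h) = even (x div h)"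
proof -
  have e: "x mod (h*2) = h * (x div h mod 2) + x mod h" by (rule mod_mult2_eq)
  have "x mod h < h" using assms by simp
  show ?thesis
  proof (cases "even (x div h)")
    case True then have "x div h mod 2 = 0" by presburger
    then show ?thesis using e \<open>x mod h < h\<close> True by (simp add: mult.commute)
  next
    case False then have "x div h mod 2 = 1" by presburger
    then show ?thesis using e False by (simp add: mult.commute)
  qed
qed

lemma H_dep: assumes "h > 0" "x div h = y div h" shows "H h (x mod (2*h)) = H h (y mod (2*h))"
  by (simp add: H_def mod2h_iff[OF assms(1)] assms(2))

lemma H_abs: "\<bar>H h r\<bar> = 1" by (simp add: H_def)

lemma two_pow_pred: "a \<ge> 1 \<Longrightarrow> 2 * (2::nat)^(a-1) = 2^a"
  by (cases a) auto

locale grid =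
  fixes m :: nat and c :: "nat \<Rightarrow> nat"
  assumes m1: "m \<ge> 1"
begin

definition tH :: "nat \<Rightarrow> nat \<Rightarrow> real" where "tH a n = H (2^(a-1)) (n mod (2*2^(a-1)))"
definition sH :: "nat \<Rightarrow> nat \<Rightarrow> real" where "sH k j = H (2^(m-k)) (j mod (2*2^(m-k)))"
definition emp :: "nat \<Rightarrow> nat \<Rightarrow> nat \<Rightarrow> nat \<Rightarrow> bool" where
  "emp a k b s \<longleftrightarrow> (\<forall>i<2^m. \<not>(i div 2^a = b \<and> c i div 2^(m+1-k) = s))"
definition eps :: "nat \<Rightarrow> nat \<Rightarrow> nat \<Rightarrow> real" where
  "eps p n j = (if emp p p (n div 2^p) (j div 2^(m+1-p)) then -1 else 0)"
definition f :: "nat \<Rightarrow> nat \<Rightarrow> nat \<Rightarrow> real" where "f p n j = eps p n j * tH p n * sH p j"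
definition Phi :: "nat \<Rightarrow> nat \<Rightarrow> nat \<Rightarrow> real" where "Phi k n j = (\<Prod>p\<in>{1..k}. 1 + f p n j / 4)"
definition Psi :: "nat \<Rightarrow> nat \<Rightarrow> nat \<Rightarrow> nat \<Rightarrow> real" where "Psi a k n j = (\<Prod>p\<in>{a<..k}. 1 + f p n j / 4)"
definition E :: "nat \<Rightarrow> nat \<Rightarrow> real" where
  "E n j = real (card {i. i<n \<and> c i < j}) - real n * real j / 2^(m+2)"
definition SS :: "(nat \<Rightarrow> nat \<Rightarrow> real) \<Rightarrow> real" where
  "SS F = (\<Sum>n<2^m. \<Sum>j<2^(m+2). F n j)"

definition dep :: "nat \<Rightarrow> nat \<Rightarrow> (nat \<Rightarrow> nat \<Rightarrow> real) \<Rightarrow> bool" where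
  "dep e1 e2 g \<longleftrightarrow> (\<forall>n n' j j'. n div 2^e1 = n' div 2^e1 \<longrightarrow> j div 2^e2 = j' div 2^e2 \<longrightarrow> g n j = g n' j')"

lemma depD: "dep e1 e2 g \<Longrightarrow> n div 2^e1 = n' div 2^e1 \<Longrightarrow> j div 2^e2 = j' div 2^e2 \<Longrightarrow> g n j = g n' j'"
  unfolding dep_def by blast

lemma depI: "(\<And>n n' j j'. n div 2^e1 = n' div 2^e1 \<Longrightarrow> j div 2^e2 = j' div 2^e2 \<Longrightarrow> g n j = g n' j') \<Longrightarrow> dep e1 e2 g"
  unfolding dep_def by blast

lemma dep_mult: "dep e1 e2 g \<Longrightarrow> dep e1 e2 h \<Longrightarrow> dep e1 e2 (\<lambda>n j. g n j * h n j)"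
proof (rule depI)
  fix n n' j j' :: nat assume a: "dep e1 e2 g" "dep e1 e2 h" and h: "n div 2^e1 = n' div 2^e1" "j div 2^e2 = j' div 2^e2"
  have "g n j = g n' j'" by (rule depD[OF a(1) h])
  moreover have "h n j = h n' j'" by (rule depD[OF a(2) h])
  ultimately show "g n j * h n j = g n' j' * h n' j'" by simp
qed

lemma dep_mono: "dep e1 e2 g \<Longrightarrow> e1' \<le> e1 \<Longrightarrow> e2' \<le> e2 \<Longrightarrow> dep e1' e2' g"
  unfolding dep_def
proof (intro allI impI)
  fix n n' j j' :: nat
  assume a: "\<forall>n n' j j'. n div 2 ^ e1 = n' div 2 ^ e1 \<longrightarrow> j div 2 ^ e2 = j' div 2 ^ e2 \<longrightarrow> g n j = g n' j'"
    and le: "e1' \<le> e1" "e2' \<le> e2" and h: "n div 2 ^ e1' = n' div 2 ^ e1'" "j div 2 ^ e2' = j' div 2 ^ e2'"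
  have "n div 2^e1 = n' div 2^e1" by (rule div_pow_mono[OF h(1) le(1)])
  moreover have "j div 2^e2 = j' div 2^e2" by (rule div_pow_mono[OF h(2) le(2)])
  ultimately show "g n j = g n' j'" using a by blast
qed

lemma dep_prod: "(\<And>p. p \<in> P \<Longrightarrow> dep e1 e2 (g p)) \<Longrightarrow> dep e1 e2 (\<lambda>n j. \<Prod>p\<in>P. g p n j)"
proof (rule depI)
  fix n n' j j' :: nat assume a: "\<And>p. p \<in> P \<Longrightarrow> dep e1 e2 (g p)" and h: "n div 2^e1 = n' div 2^e1" "j div 2^e2 = j' div 2^e2"
  show "(\<Prod>p\<in>P. g p n j) = (\<Prod>p\<in>P. g p n' j')"
    by (rule prod.cong[OF refl], rule depD[OF a h])
qed

lemma dep_const: "dep e1 e2 (\<lambda>n j. r)" by (rule depI) (rule refl)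

lemma dep_eps: "dep p (m+1-p) (eps p)"
  by (rule depI) (simp only: eps_def)

lemma dep_tH: "p \<ge> 1 \<Longrightarrow> dep (p-1) e (\<lambda>n j. tH p n)"
  unfolding tH_def by (rule depI) (rule H_dep, simp_all)

lemma dep_sH: "dep e (m-k) (\<lambda>n j. sH k j)"
  unfolding sH_def by (rule depI) (rule H_dep, simp_all)

lemma dep_f1: "1 \<le> p \<Longrightarrow> p \<le> m \<Longrightarrow> dep (p-1) (m-p) (f p)"
proof -
  assume p: "1 \<le> p" "p \<le> m"
  have "dep (p-1) (m-p) (eps p)" by (rule dep_mono[OF dep_eps]) auto
  moreover have "dep (p-1) (m-p) (\<lambda>n j. tH p n)" by (rule dep_tH[OF p(1)])
  moreover have "dep (p-1) (m-p) (\<lambda>n j. sH p j)" by (rule dep_sH)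
  ultimately show ?thesis unfolding f_def
    using dep_mult by blast
qed

lemma f_abs: "\<bar>f p n j\<bar> \<le> 1"
  unfolding f_def eps_def tH_def sH_def H_def by (simp add: abs_mult)

lemma fac_nonneg: "0 \<le> 1 + f p n j / 4" using f_abs[of p n j] by (simp add: abs_le_iff)
lemma fac_le: "\<bar>1 + f p n j / 4\<bar> \<le> 5/4" using f_abs[of p n j] by (simp add: abs_le_iff)

lemma Phi_nonneg: "0 \<le> Phi k n j" unfolding Phi_def by (intro prod_nonneg) (simp add: fac_nonneg)

lemma Psi_abs: "\<bar>Psi a k n j\<bar> \<le> (5/4)^(k-a)"
proof -
  have "\<bar>Psi a k n j\<bar> = (\<Prod>p\<in>{a<..k}. \<bar>1 + f p n j / 4\<bar>)" unfolding Psi_def by (simp add: abs_prod)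
  also have "\<dots> \<le> (\<Prod>p\<in>{a<..k}. 5/4)" by (rule prod_mono) (metis abs_ge_zero fac_le)
  finally show ?thesis by simp
qed

end

lemma pow_id_aux:
  fixes a' d e :: nat
  shows "(2::real)^(a') * 2^(a') * 2^(e) * 2^(e) / 2^(Suc a' + d + e+2) * (2^(d+e) * 2^(Suc a' + d+1)) * (8 * 2^(d))
      = 2^(2*(Suc a' + d + e))"
  apply (simp only: power_add power_Suc mult_2)
  apply (simp add: field_simps)
  done

lemma kap_id:
  assumes "1 \<le> a" "a \<le> k" "k \<le> m"
  shows "(2::real)^(a-1) * 2^(a-1) * 2^(m-k) * 2^(m-k) / 2^(m+2) * (2^(m-a) * 2^(k+1)) = 2^(2*m) / 8 * (1/2)^(k-a)"
proof -
  define a' d e where "a' = a - 1" "d = k - a" "e = m - k"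
  then have s: "a - 1 = a'" "m - k = e" "m - a = d + e" "k - a = d" "m = Suc a' + d + e" "k = Suc a' + d"
    using assms by auto
  have "(2::real)^(a-1) * 2^(a-1) * 2^(m-k) * 2^(m-k) / 2^(m+2) * (2^(m-a) * 2^(k+1)) * (8 * 2^(k-a))
      = 2^(2*m)"
    unfolding s(1-4) unfolding s(5,6) by (rule pow_id_aux)
  then show ?thesis by (simp add: field_simps power_one_over)
qed

context grid begin

lemma dep_fun: "dep e1 e2 g \<Longrightarrow> dep e1 e2 (\<lambda>n j. \<phi> (g n j))"
proof (rule depI)
  fix n n' j j' :: nat assume a: "dep e1 e2 g" and h: "n div 2^e1 = n' div 2^e1" "j div 2^e2 = j' div 2^e2"
  show "\<phi> (g n j) = \<phi> (g n' j')" using depD[OF a h] by simp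
qed

lemma blk:
  assumes a1: "1 \<le> a" and ak: "a \<le> k" and km: "k \<le> m" and gd: "dep a (m+1-k) g"
  and ge: "\<And>n j i. g n j \<noteq> 0 \<Longrightarrow> i < 2^m \<Longrightarrow> \<not>(i div 2^a = n div 2^a \<and> c i div 2^(m+1-k) = j div 2^(m+1-k))"
  shows "SS (\<lambda>n j. E n j * g n j * tH a n * sH k j)
     = -((2::real)^(a-1) * 2^(a-1) * 2^(m-k) * 2^(m-k) / 2^(m+2)) * (\<Sum>b<2^(m-a). \<Sum>s<2^(k+1). g (b*2^a) (s*2^(m+1-k)))"
proof -
  have t: "2 * (2::nat)^(a-1) = 2^a" using a1 by (rule two_pow_pred)
  have s: "2 * (2::nat)^(m-k) = 2^(m+1-k)" using km by (simp add: Suc_diff_le)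
  have N: "(2::nat)^m = 2^(m-a) * (2 * 2^(a-1))" unfolding t using ak km by (simp add: power_add[symmetric])
  have G: "(2::nat)^(m+2) = 2^(k+1) * (2 * 2^(m-k))" unfolding s using km by (simp add: power_add[symmetric])
  have "SS (\<lambda>n j. E n j * g n j * tH a n * sH k j)
     = (\<Sum>n<2^m. \<Sum>j<2^(k+1) * (2 * 2^(m-k)). (real (card {i. i<n \<and> c i < j}) - real n * real j / 2^(m+2)) * g n j
          * H (2^(a-1)) (n mod (2*2^(a-1))) * H (2^(m-k)) (j mod (2*2^(m-k))))"
    unfolding SS_def E_def tH_def sH_def G by simp
  also have "\<dots> = -(real (2^(a-1)) * real (2^(a-1)) * real (2^(m-k)) * real (2^(m-k)) / 2^(m+2))
        * (\<Sum>b<2^(m-a). \<Sum>s<2^(k+1). g (b*(2*2^(a-1))) (s*(2*2^(m-k))))"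
  proof (rule block_gen)
    show "(2::nat)^(a-1) > 0" "(2::nat)^(m-k) > 0" by simp_all
    show "(2::nat)^m = 2^(m-a) * (2 * 2^(a-1))" by (rule N)
    fix n n' j j' :: nat
    assume "n div (2 * 2^(a-1)) = n' div (2 * 2^(a-1))" "j div (2 * 2^(m-k)) = j' div (2 * 2^(m-k))"
    then show "g n j = g n' j'" unfolding t s by (rule depD[OF gd])
  next
    fix n j i :: nat assume "g n j \<noteq> 0" "i < 2^m"
    then show "\<not>(i div (2 * 2^(a-1)) = n div (2 * 2^(a-1)) \<and> c i div (2 * 2^(m-k)) = j div (2 * 2^(m-k)))"
      unfolding t s by (rule ge)
  qed
  finally show ?thesis unfolding t s by simp
qed

end

lemma sum_ind_card: "finite X \<Longrightarrow> (\<Sum>x\<in>X. if P x then 1 else 0::real) = real (card {x\<in>X. P x})"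
proof -
  assume "finite X"
  then have "(\<Sum>x\<in>{x\<in>X. P x}. 1::real) = (\<Sum>x\<in>X. if P x then 1 else 0)" by (rule sum.inter_filter)
  then show ?thesis by simp
qed

context grid begin

lemma count_nonempty:
  "(\<Sum>b<A. \<Sum>s<S. if emp k k b s then 0 else 1::real) \<le> 2^m"
proof -
  let ?phi = "\<lambda>i. (i div 2^k, c i div 2^(m+1-k))"
  have "(\<Sum>b<A. \<Sum>s<S. if emp k k b s then 0 else 1::real) = (\<Sum>x\<in>{..<A}\<times>{..<S}. if \<not> emp k k (fst x) (snd x) then 1 else 0)"
    by (simp add: sum.cartesian_product case_prod_beta) (rule sum.cong, auto)
  also have "\<dots> = real (card {x\<in>{..<A}\<times>{..<S}. \<not> emp k k (fst x) (snd x)})"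
    by (rule sum_ind_card) simp
  also have "\<dots> \<le> real (card {..<(2::nat)^m})"
  proof -
    have "{x\<in>{..<A}\<times>{..<S}. \<not> emp k k (fst x) (snd x)} \<subseteq> ?phi ` {..<2^m}"
      unfolding emp_def by auto
    then have "card {x\<in>{..<A}\<times>{..<S}. \<not> emp k k (fst x) (snd x)} \<le> card {..<(2::nat)^m}"
      by (intro surj_card_le) auto
    then show ?thesis by simp
  qed
  finally show ?thesis by simp
qed

lemma main_term:
  assumes k1: "1 \<le> k" and km: "k \<le> m"
  shows "SS (\<lambda>n j. E n j * f k n j) \<ge> 2^(2*m) / 16"
proof -
  let ?kap = "(2::real)^(k-1) * 2^(k-1) * 2^(m-k) * 2^(m-k) / 2^(m+2)"
  have "SS (\<lambda>n j. E n j * f k n j) = SS (\<lambda>n j. E n j * eps k n j * tH k n * sH k j)"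
    unfolding f_def by (simp add: mult_ac)
  also have "\<dots> = -?kap * (\<Sum>b<2^(m-k). \<Sum>s<2^(k+1). eps k (b*2^k) (s*2^(m+1-k)))"
  proof (rule blk[OF k1 order_refl km])
    show "dep k (m+1-k) (eps k)" by (rule dep_eps)
    fix n j i :: nat assume "eps k n j \<noteq> 0" "i < 2^m"
    then show "\<not>(i div 2^k = n div 2^k \<and> c i div 2^(m+1-k) = j div 2^(m+1-k))"
      unfolding eps_def emp_def by (auto split: if_splits)
  qed
  also have "\<dots> = ?kap * (\<Sum>b<2^(m-k). \<Sum>s<2^(k+1). if emp k k b s then 1 else 0)"
  proof -
    have "(\<Sum>b<(2::nat)^(m-k). \<Sum>s<(2::nat)^(k+1). eps k (b*2^k) (s*2^(m+1-k)))
       = (\<Sum>b<(2::nat)^(m-k). \<Sum>s<(2::nat)^(k+1). - (if emp k k b s then 1 else 0))"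
      unfolding eps_def by (intro sum.cong refl) simp
    also have "\<dots> = - (\<Sum>b<(2::nat)^(m-k). \<Sum>s<(2::nat)^(k+1). (if emp k k b s then 1 else 0))"
      by (simp add: sum_negf)
    finally show ?thesis by simp
  qed
  finally have eq: "SS (\<lambda>n j. E n j * f k n j) = ?kap * (\<Sum>b<2^(m-k). \<Sum>s<2^(k+1). if emp k k b s then 1 else 0)" .
  have cnt: "(\<Sum>b<(2::nat)^(m-k). \<Sum>s<(2::nat)^(k+1). if emp k k b s then 1 else 0::real) \<ge> 2^m"
  proof -
    have "(\<Sum>b<(2::nat)^(m-k). \<Sum>s<(2::nat)^(k+1). if emp k k b s then 1 else 0::real)
       + (\<Sum>b<(2::nat)^(m-k). \<Sum>s<(2::nat)^(k+1). if emp k k b s then 0 else 1::real) = 2^(m-k) * 2^(k+1)"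
      by (simp add: sum.distrib[symmetric] if_distrib cong: if_cong)
    also have "(2::real)^(m-k) * 2^(k+1) = 2 * 2^m" using km by (simp add: power_add[symmetric])
    finally show ?thesis using count_nonempty[where A="2^(m-k)" and S="2^(k+1)" and k=k] by simp
  qed
  have kap: "?kap * (2^(m-k) * 2^(k+1)) = 2^(2*m) / 8" using kap_id[OF k1 order_refl km] by simp
  have e2: "(2::real)^(m-k) * 2^(k+1) = 2 * 2^m" using km by (simp add: power_add[symmetric])
  have aux: "\<And>K x y::real. K * (2*x) = y/8 \<Longrightarrow> K*x = y/16" by (simp add: algebra_simps)
  have kap2: "?kap * 2^m = 2^(2*m)/16" by (rule aux, subst e2[symmetric], rule kap)
  have "?kap * 2^m \<le> ?kap * (\<Sum>b<2^(m-k). \<Sum>s<2^(k+1). if emp k k b s then 1 else 0)"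
    by (intro mult_left_mono cnt) simp
  then show ?thesis using eq kap2 by linarith
qed

end

context grid begin

lemma cross_term:
  assumes a1: "1 \<le> a" and ak: "a < k" and km: "k \<le> m"
  shows "\<bar>SS (\<lambda>n j. E n j * (f a n j * Psi a (k-1) n j * f k n j))\<bar> \<le> 2^(2*m)/8 * (1/2)^(k-a) * (5/4)^(k-1-a)"
proof -
  define g where "g n j = eps a n j * sH a j * Psi a (k-1) n j * eps k n j * tH k n" for n j
  let ?kap = "(2::real)^(a-1) * 2^(a-1) * 2^(m-k) * 2^(m-k) / 2^(m+2)"
  have "SS (\<lambda>n j. E n j * (f a n j * Psi a (k-1) n j * f k n j)) = SS (\<lambda>n j. E n j * g n j * tH a n * sH k j)"
    unfolding f_def g_def by (simp add: mult_ac)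
  also have "\<dots> = -?kap * (\<Sum>b<2^(m-a). \<Sum>s<2^(k+1). g (b*2^a) (s*2^(m+1-k)))"
  proof (rule blk[OF a1 _ km])
    show "a \<le> k" using ak by simp
    have d1: "dep a (m+1-k) (eps a)" by (rule dep_mono[OF dep_eps]) (use ak in auto)
    have d2: "dep a (m+1-k) (\<lambda>n j. sH a j)" by (rule dep_mono[OF dep_sH[of a a]]) (use ak in auto)
    have d3: "dep a (m+1-k) (Psi a (k-1))"
      unfolding Psi_def
    proof (rule dep_prod)
      fix p assume p: "p \<in> {a<..k-1}"
      have "dep (p-1) (m-p) (f p)" by (rule dep_f1) (use p km in auto)
      then have "dep a (m+1-k) (f p)" by (rule dep_mono) (use p km in auto)
      then show "dep a (m+1-k) (\<lambda>n j. 1 + f p n j / 4)" by (rule dep_fun)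
    qed
    have d4: "dep a (m+1-k) (eps k)" by (rule dep_mono[OF dep_eps]) (use ak in auto)
    have d5: "dep a (m+1-k) (\<lambda>n j. tH k n)" by (rule dep_mono[OF dep_tH]) (use ak in auto)
    show "dep a (m+1-k) g" unfolding g_def
      by (rule dep_mult[OF dep_mult[OF dep_mult[OF dep_mult[OF d1 d2] d3] d4] d5])
  next
    fix n j i :: nat assume gn: "g n j \<noteq> 0" and i: "i < 2^m"
    then have "eps a n j \<noteq> 0" unfolding g_def by auto
    then have e: "emp a a (n div 2^a) (j div 2^(m+1-a))" unfolding eps_def by (auto split: if_splits)
    show "\<not>(i div 2^a = n div 2^a \<and> c i div 2^(m+1-k) = j div 2^(m+1-k))"
    proof
      assume h: "i div 2^a = n div 2^a \<and> c i div 2^(m+1-k) = j div 2^(m+1-k)"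
      have "c i div 2^(m+1-a) = j div 2^(m+1-a)" by (rule div_pow_mono[where a="m+1-k"]) (use h ak in auto)
      then show False using e i h unfolding emp_def by blast
    qed
  qed
  finally have eq: "SS (\<lambda>n j. E n j * (f a n j * Psi a (k-1) n j * f k n j)) = -?kap * (\<Sum>b<2^(m-a). \<Sum>s<2^(k+1). g (b*2^a) (s*2^(m+1-k)))" .
  have gb: "\<bar>g n j\<bar> \<le> (5/4)^(k-1-a)" for n j
  proof -
    have r: "\<bar>eps a n j * sH a j * eps k n j * tH k n\<bar> \<le> 1"
      unfolding eps_def sH_def tH_def H_def by (simp add: abs_mult)
    have "\<bar>g n j\<bar> = \<bar>Psi a (k-1) n j\<bar> * \<bar>eps a n j * sH a j * eps k n j * tH k n\<bar>"
      unfolding g_def by (simp only: abs_mult[symmetric]) (simp only: mult_ac)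
    also have "\<dots> \<le> \<bar>Psi a (k-1) n j\<bar>" by (rule mult_left_le[OF r abs_ge_zero])
    also have "\<dots> \<le> (5/4)^(k-1-a)" by (rule Psi_abs)
    finally show ?thesis .
  qed
  have "\<bar>\<Sum>b<(2::nat)^(m-a). \<Sum>s<(2::nat)^(k+1). g (b*2^a) (s*2^(m+1-k))\<bar>
      \<le> (\<Sum>b<(2::nat)^(m-a). \<Sum>s<(2::nat)^(k+1). (5/4)^(k-1-a))"
    by (rule order_trans[OF sum_abs], rule sum_mono, rule order_trans[OF sum_abs], rule sum_mono, rule gb)
  also have "\<dots> = 2^(m-a) * 2^(k+1) * (5/4)^(k-1-a)" by simp
  finally have sb: "\<bar>\<Sum>b<(2::nat)^(m-a). \<Sum>s<(2::nat)^(k+1). g (b*2^a) (s*2^(m+1-k))\<bar> \<le> 2^(m-a) * 2^(k+1) * (5/4)^(k-1-a)" .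
  have kp: "?kap \<ge> 0" by simp
  have "\<bar>SS (\<lambda>n j. E n j * (f a n j * Psi a (k-1) n j * f k n j))\<bar> = ?kap * \<bar>\<Sum>b<(2::nat)^(m-a). \<Sum>s<(2::nat)^(k+1). g (b*2^a) (s*2^(m+1-k))\<bar>"
    by (simp only: eq abs_mult abs_minus_cancel abs_of_nonneg[OF kp])
  also have "\<dots> \<le> ?kap * (2^(m-a) * 2^(k+1) * (5/4)^(k-1-a))" by (rule mult_left_mono[OF sb kp])
  also have "\<dots> = (?kap * (2^(m-a) * 2^(k+1))) * (5/4)^(k-1-a)" by (simp only: mult_ac)
  also have "\<dots> = 2^(2*m)/8 * (1/2)^(k-a) * (5/4)^(k-1-a)" using ak by (subst kap_id[OF a1 _ km]) simp_all
  finally show ?thesis .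
qed

end

lemma prod_expand:
  fixes u :: "nat \<Rightarrow> real"
  shows "(\<Prod>p\<in>{1..k}. 1 + u p) = 1 + (\<Sum>a\<in>{1..k}. u a * (\<Prod>p\<in>{a<..k}. 1 + u p))"
proof (induction k)
  case 0 then show ?case by simp
next
  case (Suc k)
  have i1: "{1..Suc k} = insert (Suc k) {1..k}" by (rule atLeastAtMostSuc_conv) simp
  have i2: "{a<..Suc k} = insert (Suc k) {a<..k}" if "a \<in> {1..k}" for a using that by auto
  have "(\<Sum>a\<in>{1..Suc k}. u a * (\<Prod>p\<in>{a<..Suc k}. 1 + u p))
      = u (Suc k) + (\<Sum>a\<in>{1..k}. u a * (\<Prod>p\<in>{a<..Suc k}. 1 + u p))"
    unfolding i1 by (simp add: greaterThanAtMost_empty)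
  also have "(\<Sum>a\<in>{1..k}. u a * (\<Prod>p\<in>{a<..Suc k}. 1 + u p)) = (\<Sum>a\<in>{1..k}. u a * (\<Prod>p\<in>{a<..k}. 1 + u p)) * (1 + u (Suc k))"
    unfolding sum_distrib_right
    by (intro sum.cong refl) (simp add: i2)
  finally show ?case unfolding i1 using Suc by (simp add: algebra_simps)
qed

lemma err_bound: "(\<Sum>a\<in>{1..k}. (1/2::real)^(Suc k - a) * (5/4)^(k - a)) \<le> 4/3"
proof (induction k)
  case 0 then show ?case by simp
next
  case (Suc k)
  have i1: "{1..Suc k} = insert (Suc k) {1..k}" by (rule atLeastAtMostSuc_conv) simp
  have "(\<Sum>a\<in>{1..Suc k}. (1/2::real)^(Suc (Suc k) - a) * (5/4)^(Suc k - a))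
      = 1/2 + (\<Sum>a\<in>{1..k}. (1/2::real)^(Suc (Suc k) - a) * (5/4)^(Suc k - a))"
    unfolding i1 by simp
  also have "(\<Sum>a\<in>{1..k}. (1/2::real)^(Suc (Suc k) - a) * (5/4)^(Suc k - a))
      = 5/8 * (\<Sum>a\<in>{1..k}. (1/2::real)^(Suc k - a) * (5/4)^(k - a))"
    unfolding sum_distrib_left
    by (intro sum.cong refl) (simp add: Suc_diff_le)
  finally show ?case using Suc by simp
qed

lemma sum_H_const:
  assumes h: "h > 0" and u: "\<And>j j'. j div (2*h) = j' div (2*h) \<Longrightarrow> u j = u j'"
  shows "(\<Sum>j<S*(2*h). u j * H h (j mod (2*h))) = 0"
proof -
  have "(\<Sum>j<S*(2*h). u j * H h (j mod (2*h))) = (\<Sum>s<S. \<Sum>q<2*h. u (s*(2*h)+q) * H h ((s*(2*h)+q) mod (2*h)))"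
    by (rule sum_blocks)
  also have "\<dots> = (\<Sum>s<S. u (s*(2*h)) * (\<Sum>q<2*h. H h q))"
    unfolding sum_distrib_left
  proof (intro sum.cong refl)
    fix s q assume q: "q \<in> {..<2*h}"
    have "u (s*(2*h)+q) = u (s*(2*h))" by (rule u) (use q h in simp)
    then show "u (s*(2*h)+q) * H h ((s*(2*h)+q) mod (2*h)) = u (s*(2*h)) * H h q" using q by simp
  qed
  also have "\<dots> = 0" by (simp add: H_sum0)
  finally show ?thesis .
qed

context grid begin

lemma SS_add: "SS (\<lambda>n j. F n j + G n j) = SS F + SS G"
  unfolding SS_def by (simp add: sum.distrib)
lemma SS_diff: "SS (\<lambda>n j. F n j - G n j) = SS F - SS G"
  unfolding SS_def by (simp add: sum_subtractf)
lemma SS_cmult: "SS (\<lambda>n j. r * F n j) = r * SS F"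
  unfolding SS_def by (simp add: sum_distrib_left)
lemma SS_sum: "finite A \<Longrightarrow> SS (\<lambda>n j. \<Sum>a\<in>A. F a n j) = (\<Sum>a\<in>A. SS (F a))"
proof -
  assume "finite A"
  have "(\<Sum>n<(2::nat)^m. \<Sum>j<(2::nat)^(m+2). \<Sum>a\<in>A. F a n j) = (\<Sum>n<(2::nat)^m. \<Sum>a\<in>A. \<Sum>j<(2::nat)^(m+2). F a n j)"
    by (rule sum.cong[OF refl], rule sum.swap)
  also have "\<dots> = (\<Sum>a\<in>A. \<Sum>n<(2::nat)^m. \<Sum>j<(2::nat)^(m+2). F a n j)" by (rule sum.swap)
  finally show ?thesis unfolding SS_def .
qed
lemma SS_mono: "(\<And>n j. F n j \<le> G n j) \<Longrightarrow> SS F \<le> SS G"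
  unfolding SS_def by (intro sum_mono) auto
lemma SS_abs: "\<bar>SS F\<bar> \<le> SS (\<lambda>n j. \<bar>F n j\<bar>)"
  unfolding SS_def by (rule order_trans[OF sum_abs], rule sum_mono, rule sum_abs)
lemma SS_const: "SS (\<lambda>n j. r) = 2^m * 2^(m+2) * r"
  unfolding SS_def by simp

lemma Phi_Suc: "Phi (Suc k) n j = Phi k n j * (1 + f (Suc k) n j / 4)"
  unfolding Phi_def by (subst atLeastAtMostSuc_conv) (simp_all add: mult.commute)

lemma zero_term:
  assumes k1: "1 \<le> k" and km: "k \<le> m"
  shows "SS (\<lambda>n j. Phi (k-1) n j * f k n j) = 0"
proof -
  define u where "u n j = Phi (k-1) n j * eps k n j * tH k n" for n j
  have du: "dep 0 (m+1-k) u"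
  proof -
    have d1: "dep 0 (m+1-k) (Phi (k-1))" unfolding Phi_def
    proof (rule dep_prod)
      fix p assume p: "p \<in> {1..k-1}"
      have "dep (p-1) (m-p) (f p)" by (rule dep_f1) (use p km in auto)
      then have "dep 0 (m+1-k) (f p)" by (rule dep_mono) (use p km in auto)
      then show "dep 0 (m+1-k) (\<lambda>n j. 1 + f p n j / 4)" by (rule dep_fun)
    qed
    have d2: "dep 0 (m+1-k) (eps k)" by (rule dep_mono[OF dep_eps]) auto
    have d3: "dep 0 (m+1-k) (\<lambda>n j. tH k n)" by (rule dep_mono[OF dep_tH]) (use k1 in auto)
    show ?thesis unfolding u_def by (rule dep_mult[OF dep_mult[OF d1 d2] d3])
  qed
  have s: "2 * (2::nat)^(m-k) = 2^(m+1-k)" using km by (simp add: Suc_diff_le)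
  have G: "(2::nat)^(m+2) = 2^(k+1) * (2 * 2^(m-k))" unfolding s using km by (simp add: power_add[symmetric])
  have "SS (\<lambda>n j. Phi (k-1) n j * f k n j) = (\<Sum>n<2^m. \<Sum>j<2^(k+1) * (2 * 2^(m-k)). u n j * H (2^(m-k)) (j mod (2 * 2^(m-k))))"
    unfolding SS_def G u_def f_def sH_def by (simp add: mult_ac)
  also have "\<dots> = (\<Sum>n<(2::nat)^m. 0)"
  proof (intro sum.cong refl sum_H_const)
    show "(2::nat)^(m-k) > 0" by simp
    fix n j j' :: nat assume "j div (2 * 2^(m-k)) = j' div (2 * 2^(m-k))"
    then show "u n j = u n j'" unfolding s by (intro depD[OF du]) simp_all
  qed
  finally show ?thesis by simp
qed

lemma Phi_sum: "k \<le> m \<Longrightarrow> SS (Phi k) = 2^m * 2^(m+2)"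
proof (induction k)
  case 0 then show ?case unfolding Phi_def by (simp add: SS_const)
next
  case (Suc k)
  have "SS (Phi (Suc k)) = SS (\<lambda>n j. Phi k n j + (1/4) * (Phi k n j * f (Suc k) n j))"
    unfolding Phi_Suc by (simp add: algebra_simps)
  also have "\<dots> = SS (Phi k) + (1/4) * SS (\<lambda>n j. Phi (Suc k - 1) n j * f (Suc k) n j)"
    by (simp only: SS_add SS_cmult diff_Suc_1)
  also have "SS (\<lambda>n j. Phi (Suc k - 1) n j * f (Suc k) n j) = 0"
    by (rule zero_term) (use Suc.prems in auto)
  finally show ?case using Suc by simp
qed

end

context grid begin

lemma Tk:
  assumes k1: "1 \<le> k" and km: "k \<le> m"
  shows "SS (\<lambda>n j. E n j * (Phi (k-1) n j * f k n j)) \<ge> 2^(2*m)/48"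
proof -
  define k' where "k' = k - 1"
  have kk: "k = Suc k'" using k1 unfolding k'_def by simp
  have pe: "Phi k' n j = 1 + (\<Sum>a\<in>{1..k'}. f a n j / 4 * Psi a k' n j)" for n j
    unfolding Phi_def Psi_def by (rule prod_expand)
  have "SS (\<lambda>n j. E n j * (Phi (k-1) n j * f k n j))
      = SS (\<lambda>n j. E n j * f k n j + (\<Sum>a\<in>{1..k'}. (1/4) * (E n j * (f a n j * Psi a (k-1) n j * f k n j))))"
    unfolding k'_def[symmetric] pe
    by (simp add: algebra_simps sum_distrib_left sum_distrib_right)
  also have "\<dots> = SS (\<lambda>n j. E n j * f k n j) + (\<Sum>a\<in>{1..k'}. (1/4) * SS (\<lambda>n j. E n j * (f a n j * Psi a (k-1) n j * f k n j)))"
    by (simp only: SS_add SS_sum[OF finite_atLeastAtMost] SS_cmult)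
  finally have eq: "SS (\<lambda>n j. E n j * (Phi (k-1) n j * f k n j)) = SS (\<lambda>n j. E n j * f k n j) + (\<Sum>a\<in>{1..k'}. (1/4) * SS (\<lambda>n j. E n j * (f a n j * Psi a (k-1) n j * f k n j)))" .
  have lb: "(1/4) * SS (\<lambda>n j. E n j * (f a n j * Psi a (k-1) n j * f k n j)) \<ge> - ((1/4) * (2^(2*m)/8) * ((1/2::real)^(Suc k' - a) * (5/4)^(k' - a)))"
    if a: "a \<in> {1..k'}" for a
  proof -
    have "\<bar>SS (\<lambda>n j. E n j * (f a n j * Psi a (k-1) n j * f k n j))\<bar> \<le> 2^(2*m)/8 * (1/2)^(k-a) * (5/4)^(k-1-a)"
      by (rule cross_term) (use a kk km in auto)
    then show ?thesis unfolding kk by (simp add: abs_le_iff)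
  qed
  have "(\<Sum>a\<in>{1..k'}. (1/4) * SS (\<lambda>n j. E n j * (f a n j * Psi a (k-1) n j * f k n j)))
      \<ge> (\<Sum>a\<in>{1..k'}. - ((1/4) * (2^(2*m)/8) * ((1/2::real)^(Suc k' - a) * (5/4)^(k' - a))))"
    by (rule sum_mono) (rule lb)
  moreover have "(\<Sum>a\<in>{1..k'}. - ((1/4) * (2^(2*m)/8) * ((1/2::real)^(Suc k' - a) * (5/4)^(k' - a))))
      = - ((1/4) * (2^(2*m)/8) * (\<Sum>a\<in>{1..k'}. (1/2::real)^(Suc k' - a) * (5/4)^(k' - a)))"
    by (simp add: sum_negf sum_distrib_left)
  moreover have "(1/4) * (2^(2*m)/8) * (\<Sum>a\<in>{1..k'}. (1/2::real)^(Suc k' - a) * (5/4)^(k' - a)) \<le> (1/4) * (2^(2*m)/8) * (4/3)"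
    by (intro mult_left_mono err_bound) simp
  moreover have "SS (\<lambda>n j. E n j * f k n j) \<ge> 2^(2*m)/16" by (rule main_term[OF k1 km])
  ultimately show ?thesis unfolding eq by linarith
qed

lemma total:
  "k \<le> m \<Longrightarrow> SS (\<lambda>n j. E n j * (Phi k n j - 1)) \<ge> real k * 2^(2*m)/192"
proof (induction k)
  case 0 then show ?case unfolding Phi_def by (simp add: SS_def)
next
  case (Suc k)
  have "SS (\<lambda>n j. E n j * (Phi (Suc k) n j - 1))
      = SS (\<lambda>n j. E n j * (Phi k n j - 1) + (1/4) * (E n j * (Phi (Suc k - 1) n j * f (Suc k) n j)))"
    unfolding Phi_Suc by (simp add: algebra_simps)
  also have "\<dots> = SS (\<lambda>n j. E n j * (Phi k n j - 1)) + (1/4) * SS (\<lambda>n j. E n j * (Phi (Suc k - 1) n j * f (Suc k) n j))"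
    by (simp only: SS_add SS_cmult)
  finally have eq: "SS (\<lambda>n j. E n j * (Phi (Suc k) n j - 1)) = SS (\<lambda>n j. E n j * (Phi k n j - 1)) + (1/4) * SS (\<lambda>n j. E n j * (Phi (Suc k - 1) n j * f (Suc k) n j))" .
  have "SS (\<lambda>n j. E n j * (Phi (Suc k - 1) n j * f (Suc k) n j)) \<ge> 2^(2*m)/48"
    by (rule Tk) (use Suc.prems in auto)
  moreover have "SS (\<lambda>n j. E n j * (Phi k n j - 1)) \<ge> real k * 2^(2*m)/192" using Suc by simp
  ultimately show ?case unfolding eq by (simp add: algebra_simps)
qed

lemma exists_big: "\<exists>n<2^m. \<exists>j<2^(m+2). \<bar>E n j\<bar> \<ge> real m / 2000"
proof (rule ccontr)
  assume neg: "\<not> ?thesis"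
  have small: "\<bar>E n j\<bar> \<le> real m / 2000" if "n < 2^m" "j < 2^(m+2)" for n j :: nat
  proof -
    have "\<not> (\<bar>E n j\<bar> \<ge> real m / 2000)" using neg that by blast
    then show ?thesis by simp
  qed
  have "real m * 2^(2*m)/192 \<le> SS (\<lambda>n j. E n j * (Phi m n j - 1))" by (rule total) simp
  also have "\<dots> \<le> SS (\<lambda>n j. \<bar>E n j * (Phi m n j - 1)\<bar>)" by (rule order_trans[OF abs_ge_self SS_abs])
  also have "\<dots> \<le> SS (\<lambda>n j. real m / 2000 * (Phi m n j + 1))"
    unfolding SS_def
  proof (intro sum_mono)
    fix n j :: nat assume n: "n \<in> {..<2^m}" and j: "j \<in> {..<2^(m+2)}"
    have "\<bar>E n j * (Phi m n j - 1)\<bar> = \<bar>E n j\<bar> * \<bar>Phi m n j - 1\<bar>" by (simp add: abs_mult)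
    also have "\<dots> \<le> real m / 2000 * (Phi m n j + 1)"
    proof (rule mult_mono)
      show "\<bar>E n j\<bar> \<le> real m / 2000" using small[of n j] n j by simp
      show "\<bar>Phi m n j - 1\<bar> \<le> Phi m n j + 1" using Phi_nonneg[of m n j] by (simp add: abs_le_iff)
    qed simp_all
    finally show "\<bar>E n j * (Phi m n j - 1)\<bar> \<le> real m / 2000 * (Phi m n j + 1)" .
  qed
  also have "\<dots> = real m / 2000 * (SS (Phi m) + SS (\<lambda>n j. 1))"
    by (simp only: SS_cmult SS_add)
  also have "\<dots> = real m / 2000 * (8 * 2^(2*m))"
  proof -
    have e1: "(2::real)^(2*m) = 2^m * 2^m" by (metis mult_2 power_add)
    have e2: "(2::real)^(m+2) = 2^m * 4" by (simp add: power_add)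
    have "SS (Phi m) = 2^m * 2^(m+2)" by (rule Phi_sum) simp
    moreover have "SS (\<lambda>n j. 1) = 2^m * 2^(m+2)" using SS_const[of 1] by simp
    ultimately show ?thesis unfolding e1 e2 by simp
  qed
  finally have "real m * 2^(2*m)/192 \<le> real m / 2000 * (8 * 2^(2*m))" .
  moreover have "real m / 2000 * (8 * 2^(2*m)) < real m * 2^(2*m)/192"
  proof -
    have X: "real m * 2^(2*m) > 0" using m1 by simp
    have "real m / 2000 * (8 * 2^(2*m)) = real m * 2^(2*m) / 250" by simp
    then show ?thesis using X by linarith
  qed
  ultimately show False by linarith
qed

end

fun vdc :: "nat \<Rightarrow> real" where
  "vdc n = (if n = 0 then 0 else vdc (n div 2) / 2 + (if odd n then 1/2 else 0))"

declare vdc.simps[simp del]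

lemma vdc_0: "vdc 0 = 0" by (simp add: vdc.simps)
lemma vdc_even: "vdc (2*i) = vdc i / 2"
  by (cases "i = 0") (simp_all add: vdc.simps[of "2*i"] vdc_0)
lemma vdc_odd: "vdc (2*i+1) = vdc i / 2 + 1/2"
  using vdc.simps[of "2*i+1"] by simp

lemma vdc_range: "0 \<le> vdc n \<and> vdc n < 1"
proof (induction n rule: less_induct)
  case (less n)
  show ?case
  proof (cases "n = 0")
    case True then show ?thesis by (simp add: vdc_0)
  next
    case False
    then have "n div 2 < n" by simp
    then have ih: "0 \<le> vdc (n div 2) \<and> vdc (n div 2) < 1" by (rule less)
    show ?thesis using False ih by (simp add: vdc.simps[of n])
  qed
qed

definition cs :: "nat \<Rightarrow> real \<Rightarrow> real" where
  "cs N t = (\<Sum>k<N. if vdc k < t then 1 else 0)"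

lemma sum_even: "(\<Sum>k<2*M. g k) = (\<Sum>i<M. g (2*i)) + (\<Sum>i<M. g (2*i+1::nat)) " for g :: "nat \<Rightarrow> real"
  by (induction M) (simp_all add: algebra_simps)

lemma cs_even: "cs (2*M) t = cs M (2*t) + cs M (2*t - 1)"
proof -
  have "cs (2*M) t = (\<Sum>i<M. if vdc (2*i) < t then 1 else 0) + (\<Sum>i<M. if vdc (2*i+1) < t then 1 else 0)"
    unfolding cs_def by (rule sum_even)
  also have "\<dots> = cs M (2*t) + cs M (2*t - 1)"
    unfolding cs_def vdc_even vdc_odd by (intro arg_cong2[where f="(+)"] sum.cong refl) auto
  finally show ?thesis .
qed

lemma cs_odd: "cs (2*M+1) t = cs (M+1) (2*t) + cs M (2*t - 1)"
proof -
  have "cs (2*M+1) t = cs (2*M) t + (if vdc (2*M) < t then 1 else 0)" unfolding cs_def by simp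
  also have "\<dots> = cs (M+1) (2*t) + cs M (2*t - 1)" unfolding cs_even unfolding cs_def vdc_even by auto
  finally show ?thesis .
qed

lemma cs_zero: "t \<le> 0 \<Longrightarrow> cs M t = 0"
  unfolding cs_def using vdc_range by (intro sum.neutral) (auto simp: not_less intro: order_trans)

lemma cs_full: "1 \<le> t \<Longrightarrow> cs M t = M"
proof -
  assume "1 \<le> t"
  then have "cs M t = (\<Sum>k<M. 1)" unfolding cs_def using vdc_range by (intro sum.cong refl) (auto intro: less_le_trans)
  then show ?thesis by simp
qed

lemma stepb: fixes a b :: real
  assumes "\<bar>a\<bar> \<le> 1 + real k / 2" "\<bar>b\<bar> \<le> 1/2" shows "\<bar>a + b\<bar> \<le> 1 + real (Suc k) / 2"
proof -
  have "\<bar>a + b\<bar> \<le> \<bar>a\<bar> + \<bar>b\<bar>" by (rule abs_triangle_ineq)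
  moreover have "real (Suc k) / 2 = real k / 2 + 1/2" by simp
  ultimately show ?thesis using assms by linarith
qed

lemma disc_vdc: "N \<le> 2^k \<Longrightarrow> t \<in> {0..1} \<Longrightarrow> \<bar>cs N t - real N * t\<bar> \<le> 1 + real k / 2"
proof (induction k arbitrary: N t)
  case 0
  then have "N = 0 \<or> N = 1" by auto
  then show ?case
  proof
    assume "N = 0" then show ?thesis by (simp add: cs_def)
  next
    assume "N = 1" then show ?thesis using 0 by (simp add: cs_def vdc_0)
  qed
next
  case (Suc k)
  define M where "M = N div 2"
  have N: "N = 2*M \<or> N = 2*M+1" unfolding M_def by presburger
  have t1: "2*t \<in> {0..1}" if "t \<le> 1/2" using Suc.prems that by auto
  have t2: "2*t - 1 \<in> {0..1}" if "\<not> t \<le> 1/2" using Suc.prems that by auto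
  from N show ?case
  proof
    assume N2: "N = 2*M"
    then have "M \<le> 2^k" using Suc.prems by simp
    show ?thesis
    proof (cases "t \<le> 1/2")
      case True
      have "cs N t - real N * t = cs M (2*t) - real M * (2*t)" unfolding N2 cs_even using True by (simp add: cs_zero)
      then show ?thesis using stepb[OF Suc.IH[OF \<open>M \<le> 2^k\<close> t1[OF True]], of 0] by simp
    next
      case False
      have "cs N t - real N * t = cs M (2*t-1) - real M * (2*t-1)" unfolding N2 cs_even using False by (simp add: cs_full algebra_simps)
      then show ?thesis using stepb[OF Suc.IH[OF \<open>M \<le> 2^k\<close> t2[OF False]], of 0] by simp
    qed
  next
    assume N2: "N = 2*M+1"
    have "2*M+2 \<le> 2^Suc k"
    proof -
      have "2*M+1 \<le> 2^Suc k" using Suc.prems N2 by simp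
      moreover have "2*M+1 \<noteq> 2^Suc k"
      proof
        assume "2*M+1 = 2^Suc k"
        then have "odd ((2::nat)^Suc k)" by (metis even_add even_mult_iff even_numeral odd_one)
        moreover have "even ((2::nat)^Suc k)" by simp
        ultimately show False by blast
      qed
      ultimately show ?thesis by simp
    qed
    then have M1: "M+1 \<le> 2^k" and M0: "M \<le> 2^k" by simp_all
    show ?thesis
    proof (cases "t \<le> 1/2")
      case True
      have "cs N t - real N * t = (cs (M+1) (2*t) - real (M+1) * (2*t)) + t" unfolding N2 cs_odd using True by (simp add: cs_zero algebra_simps)
      moreover have "\<bar>cs (M+1) (2*t) - real (M+1) * (2*t)\<bar> \<le> 1 + real k / 2" by (rule Suc.IH[OF M1 t1[OF True]])
      moreover have "\<bar>t\<bar> \<le> 1/2" using True Suc.prems by simp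
      ultimately show ?thesis using stepb by simp
    next
      case False
      have "cs N t - real N * t = (cs M (2*t-1) - real M * (2*t-1)) + (1 - t)" unfolding N2 cs_odd using False by (simp add: cs_full algebra_simps)
      moreover have "\<bar>cs M (2*t-1) - real M * (2*t-1)\<bar> \<le> 1 + real k / 2" by (rule Suc.IH[OF M0 t2[OF False]])
      moreover have "\<bar>1 - t\<bar> \<le> 1/2" using False Suc.prems by simp
      ultimately show ?thesis using stepb by simp
    qed
  qed
qed

lemma card_shift: fixes N :: nat shows "card {i\<in>{1..N}. P (i - 1)} = card {k. k < N \<and> P k}"
proof -
  have "{i\<in>{1..N}. P (i - 1)} = Suc ` {k. k < N \<and> P k}"
  proof (intro equalityI subsetI)
    fix i assume "i \<in> {i\<in>{1..N}. P (i - 1)}"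
    then have "i = Suc (i - 1)" "i - 1 \<in> {k. k < N \<and> P k}" by auto
    then show "i \<in> Suc ` {k. k < N \<and> P k}" by (metis imageI)
  qed auto
  then show ?thesis by (simp add: card_image)
qed

lemma cs_card: "cs N t = real (card {k. k < N \<and> vdc k < t})"
proof -
  have "(\<Sum>k\<in>{k\<in>{..<N}. vdc k < t}. 1::real) = (\<Sum>k<N. if vdc k < t then 1 else 0)"
    by (rule sum.inter_filter) simp
  moreover have "{k\<in>{..<N}. vdc k < t} = {k. k < N \<and> vdc k < t}" by auto
  ultimately show ?thesis unfolding cs_def by simp
qed

lemma exists_pow: fixes N :: nat shows "N \<ge> 1 \<Longrightarrow> \<exists>k. N \<le> 2^k \<and> 2^k < 2*N"
proof -
  assume N: "N \<ge> 1"
  define k where "k = (LEAST k. N \<le> (2::nat)^k)"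
  have ex: "\<exists>k. N \<le> (2::nat)^k" using less_exp[of N] by (metis less_imp_le)
  have k1: "N \<le> 2^k" unfolding k_def by (rule LeastI_ex[OF ex])
  have "2^k < 2*N"
  proof (cases k)
    case 0 then show ?thesis using N by simp
  next
    case (Suc k')
    then have "\<not> N \<le> 2^k'" unfolding k_def using not_less_Least by (metis Suc k_def lessI)
    then show ?thesis using Suc by simp
  qed
  with k1 show ?thesis by blast
qed

lemma vdc_bound:
  assumes N: "N \<ge> 2" and t: "t \<in> {0..1}"
  shows "\<bar>t - real (card {i\<in>{1..N}. vdc (i - 1) < t}) / real N\<bar> \<le> (2 / ln 2) * ln (real N) / real N"
proof -
  obtain k where k: "N \<le> 2^k" "2^k < 2*N" using exists_pow[of N] N by auto
  have d: "\<bar>cs N t - real N * t\<bar> \<le> 1 + real k / 2" by (rule disc_vdc[OF k(1) t])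
  have Npos: "real N > 0" using N by simp
  have e: "t - real (card {i\<in>{1..N}. vdc (i - 1) < t}) / real N = - (cs N t - real N * t) / real N"
    unfolding card_shift[of N "\<lambda>k. vdc k < t"] cs_card using Npos by (simp add: field_simps)
  have l2: "ln 2 > (0::real)" by simp
  have lN: "ln 2 \<le> ln (real N)" using N by simp
  have "ln ((2::real)^k) < ln (2 * real N)"
  proof -
    have "(2::real)^k < 2 * real N" using k(2) by (metis of_nat_less_iff of_nat_mult of_nat_numeral of_nat_power)
    then show ?thesis by (subst ln_less_cancel_iff) (use Npos in auto)
  qed
  then have kl: "real k * ln 2 < ln 2 + ln (real N)" using Npos by (simp add: ln_realpow ln_mult)
  have "1 + real k / 2 \<le> 2 * ln (real N) / ln 2"
  proof -
    have "ln 2 + real k * ln 2 / 2 \<le> 2 * ln (real N)" using kl lN by linarith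
    then have "(1 + real k / 2) * ln 2 \<le> 2 * ln (real N)" by (simp add: algebra_simps)
    then show ?thesis using l2 by (simp add: field_simps)
  qed
  moreover have "2 * ln (real N) / ln 2 = (2 / ln 2) * ln (real N)" by simp
  ultimately have "\<bar>cs N t - real N * t\<bar> \<le> (2 / ln 2) * ln (real N)" using d by linarith
  then have A: "\<bar>cs N t - real N * t\<bar> / real N \<le> (2 / ln 2) * ln (real N) / real N"
    using Npos by (intro divide_right_mono) simp_all
  have B: "\<bar>- (cs N t - real N * t) / real N\<bar> = \<bar>cs N t - real N * t\<bar> / real N" using Npos by simp
  show ?thesis unfolding e by (subst B) (rule A)
qed

lemma grid_bound:
  assumes N: "N \<ge> 1" and t: "t \<in> {0..1}"
  shows "\<bar>t - real (card {i\<in>{1..N}. real (i - 1) / real N < t}) / real N\<bar> \<le> 1 / real N"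
proof -
  define K where "K = nat \<lceil>real N * t\<rceil>"
  have Npos: "real N > 0" using N by simp
  have Kle: "K \<le> N"
  proof -
    have "real N * t \<le> real N" by (rule mult_left_le) (use t in auto)
    then have "\<lceil>real N * t\<rceil> \<le> int N" by (intro ceiling_le) simp
    then show ?thesis unfolding K_def by (subst nat_le_iff) assumption
  qed
  have iff: "real (i - 1) / real N < t \<longleftrightarrow> i - 1 < K" for i :: nat
  proof -
    have "real (i - 1) / real N < t \<longleftrightarrow> real (i - 1) < real N * t" using Npos by (simp add: divide_less_eq mult.commute)
    also have "\<dots> \<longleftrightarrow> int (i - 1) < \<lceil>real N * t\<rceil>" by (simp add: less_ceiling_iff)
    also have "\<dots> \<longleftrightarrow> i - 1 < K" unfolding K_def using t Npos by auto
    finally show ?thesis .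
  qed
  have "card {i\<in>{1..N}. real (i - 1) / real N < t} = card {k. k < N \<and> k < K}"
    unfolding iff by (rule card_shift)
  also have "{k. k < N \<and> k < K} = {..<K}" using Kle by auto
  finally have c: "card {i\<in>{1..N}. real (i - 1) / real N < t} = K" by simp
  have "real K = real_of_int \<lceil>real N * t\<rceil>" unfolding K_def using t Npos by simp
  then have "real K - real N * t \<ge> 0" "real K - real N * t < 1" by linarith+
  then have "\<bar>real N * t - real K\<bar> \<le> 1" by linarith
  then have "\<bar>real N * t - real K\<bar> / real N \<le> 1 / real N" using Npos by (intro divide_right_mono) simp_all
  moreover have "t - real K / real N = (real N * t - real K) / real N" using Npos by (simp add: field_simps)
  ultimately show ?thesis unfolding c by simp
qed

locale bpu =
  fixes M :: "real measure"
  assumes bp: "borel_prob_on_unit M"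
begin

lemma ps: "prob_space M" using bp unfolding borel_prob_on_unit_def by simp
sublocale prob_space M by (rule ps)

lemma sets_M: "sets M = sets borel" using bp unfolding borel_prob_on_unit_def by simp
lemma unit1: "measure M {0..1} = 1" using bp unfolding borel_prob_on_unit_def by simp

lemma inM: "A \<in> sets borel \<Longrightarrow> A \<in> sets M" using sets_M by simp

definition F :: "real \<Rightarrow> real" where "F b = measure M {0..<b}"

lemma F_mono: "b \<le> b' \<Longrightarrow> F b \<le> F b'"
  unfolding F_def by (rule finite_measure_mono) (auto intro: inM)

lemma F_nonneg: "0 \<le> F b" unfolding F_def by (rule measure_nonneg)
lemma F_le1: "F b \<le> 1" unfolding F_def by (rule prob_le_1)
lemma F_0: "F 0 = 0" unfolding F_def by simp

lemma F_LC: "(\<lambda>n. F (b - 1/Suc n)) \<longlonglongrightarrow> F b"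
proof -
  have "(\<lambda>n. measure M {0..<b - 1/Suc n}) \<longlonglongrightarrow> measure M (\<Union>n. {0..<b - 1/Suc n})"
  proof (rule finite_Lim_measure_incseq)
    show "range (\<lambda>n. {0..<b - 1/Suc n}) \<subseteq> sets M" by (auto intro: inM)
    show "incseq (\<lambda>n. {0..<b - 1/Suc n})"
      unfolding incseq_def
    proof (intro allI impI subsetI)
      fix n n' :: nat and x assume "n \<le> n'" "x \<in> {0..<b - 1/Suc n}"
      moreover have "1/real (Suc n') \<le> 1/real (Suc n)" using \<open>n \<le> n'\<close> by (intro divide_left_mono) auto
      ultimately show "x \<in> {0..<b - 1/Suc n'}" by auto
    qed
  qed
  also have "(\<Union>n. {0..<b - 1/Suc n}) = {0..<b}"
  proof (intro equalityI subsetI)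
    fix x assume "x \<in> (\<Union>n. {0..<b - 1/Suc n})"
    then obtain n where x: "0 \<le> x" "x < b - 1/real (Suc n)" by auto
    have "0 < 1/real (Suc n)" by (simp del: of_nat_Suc)
    then have "x < b" using x by linarith
    then show "x \<in> {0..<b}" using x by simp
  next
    fix x assume x: "x \<in> {0..<b}"
    then have "0 < b - x" by simp
    then obtain n where n: "1 / real (Suc n) < b - x" using nat_approx_posE by blast
    then have "x < b - 1/real (Suc n)" by linarith
    then have "x \<in> {0..<b - 1/real (Suc n)}" using x by simp
    then show "x \<in> (\<Union>n. {0..<b - 1/Suc n})" by (rule UN_I[OF UNIV_I])
  qed
  finally show ?thesis unfolding F_def .
qed

lemma F_RC0: assumes "0 \<le> b" shows "(\<lambda>n. F (b + 1/Suc n)) \<longlonglongrightarrow> measure M {0..b}"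
proof -
  have "(\<lambda>n. measure M {0..<b + 1/Suc n}) \<longlonglongrightarrow> measure M (\<Inter>n. {0..<b + 1/Suc n})"
  proof (rule finite_Lim_measure_decseq)
    show "range (\<lambda>n. {0..<b + 1/Suc n}) \<subseteq> sets M" by (auto intro: inM)
    show "decseq (\<lambda>n. {0..<b + 1/Suc n})"
      unfolding decseq_def
    proof (intro allI impI subsetI)
      fix n n' :: nat and x assume "n \<le> n'" "x \<in> {0..<b + 1/Suc n'}"
      moreover have "1/real (Suc n') \<le> 1/real (Suc n)" using \<open>n \<le> n'\<close> by (intro divide_left_mono) auto
      ultimately show "x \<in> {0..<b + 1/Suc n}" by auto
    qed
  qed
  also have "(\<Inter>n. {0..<b + 1/Suc n}) = {0..b}"
  proof (intro equalityI subsetI)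
    fix x assume x: "x \<in> (\<Inter>n. {0..<b + 1/Suc n})"
    show "x \<in> {0..b}"
    proof (rule ccontr)
      assume "x \<notin> {0..b}"
      moreover have "0 \<le> x" using x by auto
      ultimately have "0 < x - b" by auto
      then obtain n where n: "1 / real (Suc n) < x - b" using nat_approx_posE by blast
      moreover have "x < b + 1/Suc n" using x by auto
      ultimately show False by simp
    qed
  next
    fix x assume x: "x \<in> {0..b}"
    have "x < b + 1/real (Suc n)" for n
    proof -
      have "0 < 1/real (Suc n)" by (simp del: of_nat_Suc)
      moreover have "x \<le> b" using x by simp
      ultimately show ?thesis by linarith
    qed
    then show "x \<in> (\<Inter>n. {0..<b + 1/Suc n})" using x by simp
  qed
  finally show ?thesis unfolding F_def .
qed

lemma closed_split: "0 \<le> b \<Longrightarrow> measure M {0..b} = F b + measure M {b}"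
proof -
  assume b: "0 \<le> b"
  have e: "{0..b} = {0..<b} \<union> {b}" using b by auto
  have "measure M ({0..<b} \<union> {b}) = measure M {0..<b} + measure M {b}"
    by (rule finite_measure_Union) (auto intro: inM)
  then have "measure M {0..b} = measure M {0..<b} + measure M {b}" unfolding e .
  then show ?thesis unfolding F_def .
qed

lemma F_1: "F 1 = 1 - measure M {1}" using closed_split[of 1] unit1 by simp

lemma F_RC: assumes "0 \<le> b" "measure M {b} = 0" shows "(\<lambda>n. F (b + 1/Suc n)) \<longlonglongrightarrow> F b"
  using F_RC0[OF assms(1)] closed_split[OF assms(1)] assms(2) by simp

end

context bpu begin

lemma card_le_N: "card {i\<in>{1..N}. P i} \<le> N"
proof -
  have "card {i\<in>{1..N}. P i} \<le> card {1..N}" by (rule card_mono) auto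
  then show ?thesis by simp
qed

lemma frac_le1: "real (card {i\<in>{1..N}. P i}) / real N \<le> 1"
proof (cases "N = 0")
  case True then show ?thesis by simp
next
  case False
  then show ?thesis using card_le_N[of N P] by (simp add: divide_le_eq_1)
qed

lemma frac_nonneg: "0 \<le> real (card {i\<in>{1..N}. P i}) / real N" by simp

lemma sd_bdd: "bdd_above ((\<lambda>b. \<bar>measure M {0..<b} - real (card {i\<in>{1..N}. x i \<in> {0..<b}}) / real N\<bar>) ` {0..1})"
proof (rule bdd_aboveI)
  fix y assume "y \<in> (\<lambda>b. \<bar>measure M {0..<b} - real (card {i\<in>{1..N}. x i \<in> {0..<b}}) / real N\<bar>) ` {0..1}"
  then obtain b where y: "y = \<bar>F b - real (card {i\<in>{1..N}. x i \<in> {0..<b}}) / real N\<bar>" unfolding F_def by auto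
  have "0 \<le> F b" "F b \<le> 1" by (rule F_nonneg, rule F_le1)
  moreover have "0 \<le> real (card {i\<in>{1..N}. x i \<in> {0..<b}}) / real N" "real (card {i\<in>{1..N}. x i \<in> {0..<b}}) / real N \<le> 1"
    by (rule frac_nonneg, rule frac_le1)
  ultimately show "y \<le> 2" unfolding y by linarith
qed

lemma sd_ge: "b \<in> {0..1} \<Longrightarrow> \<bar>F b - real (card {i\<in>{1..N}. x i \<in> {0..<b}}) / real N\<bar> \<le> star_disc M x N"
  unfolding star_disc_def F_def by (rule cSUP_upper[OF _ sd_bdd])

lemma sd_le: "(\<And>b. b \<in> {0..1} \<Longrightarrow> \<bar>F b - real (card {i\<in>{1..N}. x i \<in> {0..<b}}) / real N\<bar> \<le> B) \<Longrightarrow> star_disc M x N \<le> B"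
  unfolding star_disc_def F_def by (rule cSUP_least) auto

definition Q :: "real \<Rightarrow> real" where "Q u = Sup {y\<in>{0..1}. F y \<le> u}"

lemma QS: assumes "0 \<le> u"
  shows "0 \<in> {y\<in>{0..1}. F y \<le> u}" "bdd_above {y\<in>{0..1}. F y \<le> u}"
  using assms F_0 by (auto intro: bdd_aboveI[where M=1])

lemma Q_range: assumes "0 \<le> u" shows "0 \<le> Q u" "Q u \<le> 1"
proof -
  show "0 \<le> Q u" unfolding Q_def by (rule cSup_upper[OF QS(1)[OF assms] QS(2)[OF assms]])
  show "Q u \<le> 1" unfolding Q_def
    apply (rule cSup_least)
    using QS(1)[OF assms] apply blast
    by auto
qed

lemma Q_iff: assumes u: "0 \<le> u" and b: "b \<in> {0..1}" shows "Q u < b \<longleftrightarrow> u < F b"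
proof
  assume "Q u < b"
  show "u < F b"
  proof (rule ccontr)
    assume "\<not> u < F b"
    then have "b \<in> {y\<in>{0..1}. F y \<le> u}" using b by simp
    then have "b \<le> Q u" unfolding Q_def by (rule cSup_upper[OF _ QS(2)[OF u]])
    with \<open>Q u < b\<close> show False by simp
  qed
next
  assume ub: "u < F b"
  let ?S = "{y\<in>{0..1}. F y \<le> u}"
  have lt: "y < b" if "y \<in> ?S" for y
  proof (rule ccontr)
    assume "\<not> y < b"
    then have "F b \<le> F y" by (intro F_mono) simp
    with that ub show False by simp
  qed
  have Qb: "Q u \<le> b" unfolding Q_def by (rule cSup_least) (use QS(1)[OF u] lt in force)+
  show "Q u < b"
  proof (rule ccontr)
    assume "\<not> Q u < b"
    then have Qe: "Q u = b" using Qb by simp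
    have "F (b - 1/Suc n) \<le> u" for n
    proof -
      have "b - 1/Suc n < Sup ?S" using Qe unfolding Q_def by simp
      then obtain y where y: "y \<in> ?S" "b - 1/Suc n < y" using less_cSupE[of _ ?S] QS(1)[OF u] by blast
      have "F (b - 1/Suc n) \<le> F y" using y(2) by (intro F_mono) simp
      then show ?thesis using y(1) by simp
    qed
    then have "F b \<le> u" by (intro LIMSEQ_le_const2[OF F_LC]) simp
    with ub show False by simp
  qed
qed

lemma transfer_upper:
  assumes v: "\<And>i. i \<in> {1..N} \<Longrightarrow> 0 \<le> v i"
    and B: "\<And>t. t \<in> {0..1} \<Longrightarrow> \<bar>t - real (card {i\<in>{1..N}. v i < t}) / real N\<bar> \<le> B"
  shows "star_disc M (\<lambda>i. Q (v i)) N \<le> B"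
proof (rule sd_le)
  fix b :: real assume b: "b \<in> {0..1}"
  have "{i\<in>{1..N}. Q (v i) \<in> {0..<b}} = {i\<in>{1..N}. v i < F b}"
    using v Q_iff[OF v b] Q_range(1)[OF v] by auto
  moreover have "F b \<in> {0..1}" using F_nonneg F_le1 by simp
  ultimately show "\<bar>F b - real (card {i\<in>{1..N}. Q (v i) \<in> {0..<b}}) / real N\<bar> \<le> B" using B by simp
qed

end

context bpu begin

lemma F_neg: "y \<le> 0 \<Longrightarrow> F y = 0"
  using F_mono[of y 0] F_nonneg[of y] F_0 by simp

lemma F_1_noatom: "measure M {1} = 0 \<Longrightarrow> F 1 = 1" using F_1 by simp

lemma sd_le1: "star_disc M x N \<le> 1"
proof (rule sd_le)
  fix b :: real assume "b \<in> {0..1}"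
  have "0 \<le> F b" "F b \<le> 1" by (rule F_nonneg, rule F_le1)
  moreover have "0 \<le> real (card {i\<in>{1..N}. x i \<in> {0..<b}}) / real N" "real (card {i\<in>{1..N}. x i \<in> {0..<b}}) / real N \<le> 1"
    by (rule frac_nonneg, rule frac_le1)
  ultimately show "\<bar>F b - real (card {i\<in>{1..N}. x i \<in> {0..<b}}) / real N\<bar> \<le> 1" by linarith
qed

lemma find_b:
  assumes na: "\<And>y. y \<in> {0..1} \<Longrightarrow> measure M {y} = 0" and t: "0 \<le> t" "t < 1"
  shows "\<exists>b\<in>{0..1}. F b = t \<and> (\<forall>y\<in>{0..1}. y < b \<longleftrightarrow> F y < t)"
proof -
  let ?S = "{y\<in>{0..1}. t \<le> F y}"
  define b where "b = Inf ?S"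
  have F1: "F 1 = 1" using F_1_noatom na[of 1] by simp
  have S1: "1 \<in> ?S" using F1 t by simp
  have bb: "bdd_below ?S" by (rule bdd_belowI[where m=0]) simp
  have b1: "b \<le> 1" unfolding b_def by (rule cInf_lower[OF S1 bb])
  have b0: "0 \<le> b" unfolding b_def by (rule cInf_greatest) (use S1 in auto)
  have below: "F y < t" if "y \<in> {0..1}" "y < b" for y
  proof (rule ccontr)
    assume "\<not> F y < t"
    then have "y \<in> ?S" using that by simp
    then have "b \<le> y" unfolding b_def by (rule cInf_lower[OF _ bb])
    with that show False by simp
  qed
  have ge: "t \<le> F b"
  proof -
    have "t \<le> F (b + 1/Suc n)" for n
    proof -
      have "Inf ?S < b + 1/Suc n" unfolding b_def[symmetric] by (simp del: of_nat_Suc)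
      moreover have ne: "?S \<noteq> {}" using S1 by blast
      ultimately obtain s where s: "s \<in> ?S" "s < b + 1/Suc n" using cInf_lessD[OF ne] by blast
      have "F s \<le> F (b + 1/Suc n)" using s(2) by (intro F_mono) simp
      then show ?thesis using s(1) by simp
    qed
    then show ?thesis by (intro LIMSEQ_le_const[OF F_RC[OF b0 na]]) (use b0 b1 in auto)
  qed
  have le: "F b \<le> t"
  proof -
    have "F (b - 1/Suc n) \<le> t" for n
    proof (cases "b - 1/Suc n < 0")
      case True then show ?thesis using F_neg[of "b - 1/Suc n"] t by simp
    next
      case False
      have p: "0 < 1/real (Suc n)" by (simp del: of_nat_Suc)
      then have "b - 1/Suc n < b" by linarith
      moreover have "b - 1/Suc n \<in> {0..1}"
      proof -
        have "0 \<le> b - 1/real (Suc n)" using False by linarith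
        moreover have "b - 1/real (Suc n) \<le> 1" using b1 p by linarith
        ultimately show ?thesis by simp
      qed
      ultimately have "F (b - 1/Suc n) < t" using below by blast
      then show ?thesis by simp
    qed
    then show ?thesis by (intro LIMSEQ_le_const2[OF F_LC]) auto
  qed
  have Fb: "F b = t" using ge le by simp
  have iff: "y < b \<longleftrightarrow> F y < t" if "y \<in> {0..1}" for y
  proof
    assume "y < b" then show "F y < t" using below that by simp
  next
    assume "F y < t"
    show "y < b"
    proof (rule ccontr)
      assume "\<not> y < b"
      then have "F b \<le> F y" by (intro F_mono) simp
      with Fb \<open>F y < t\<close> show False by simp
    qed
  qed
  show ?thesis using b0 b1 Fb iff by (intro bexI[of _ b]) auto
qed

lemma lower_half:
  assumes na: "\<And>y. y \<in> {0..1} \<Longrightarrow> measure M {y} = 0" and N: "N \<ge> 1"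
    and x: "\<And>i. i \<in> {1..N} \<Longrightarrow> x i \<in> {0..1}"
  shows "star_disc M x N \<ge> 1 / (2 * real N)"
proof (cases "\<exists>j\<in>{1..N}. x j < 1")
  case False
  have e: "{i\<in>{1..N}. x i \<in> {0..<1}} = {}" using False by auto
  have "\<bar>F 1 - real (card {i\<in>{1..N}. x i \<in> {0..<1}}) / real N\<bar> = 1"
    unfolding e using F_1_noatom na[of 1] by simp
  moreover have "\<bar>F 1 - real (card {i\<in>{1..N}. x i \<in> {0..<1}}) / real N\<bar> \<le> star_disc M x N" by (rule sd_ge) simp
  moreover have "1 / (2 * real N) \<le> 1" using N by simp
  ultimately show ?thesis by linarith
next
  case True
  then obtain j where j: "j \<in> {1..N}" "x j < 1" by blast
  define a where "a = x j"
  have a01: "a \<in> {0..1}" using x[OF j(1)] unfolding a_def .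
  define D where "D = star_disc M x N"
  define cnt where "cnt b = real (card {i\<in>{1..N}. x i \<in> {0..<b}})" for b
  have Npos: "real N > 0" using N by simp
  have d0: "\<bar>F a - cnt a / real N\<bar> \<le> D" unfolding D_def cnt_def by (rule sd_ge[OF a01])
  have key: "1 / real N - (F (a + 1/Suc n) - F a) \<le> 2 * D" if n: "a + 1/Suc n \<le> 1" for n
  proof -
    let ?b = "a + 1/Suc n"
    have pos: "0 < 1/real (Suc n)" by (simp del: of_nat_Suc)
    have b01: "?b \<in> {0..1}" using a01 n pos by simp
    have sub: "{i\<in>{1..N}. x i \<in> {0..<a}} \<subset> {i\<in>{1..N}. x i \<in> {0..<?b}}"
    proof
      show "{i\<in>{1..N}. x i \<in> {0..<a}} \<subseteq> {i\<in>{1..N}. x i \<in> {0..<?b}}"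
      proof (intro subsetI)
        fix i assume i: "i \<in> {i\<in>{1..N}. x i \<in> {0..<a}}"
        then have "x i < a" by simp
        then have "x i < ?b" using pos by linarith
        then show "i \<in> {i\<in>{1..N}. x i \<in> {0..<?b}}" using i by simp
      qed
      have "j \<in> {i\<in>{1..N}. x i \<in> {0..<?b}}" using j a01 pos unfolding a_def by simp
      moreover have "j \<notin> {i\<in>{1..N}. x i \<in> {0..<a}}" unfolding a_def by simp
      ultimately show "{i\<in>{1..N}. x i \<in> {0..<a}} \<noteq> {i\<in>{1..N}. x i \<in> {0..<?b}}" by blast
    qed
    have "card {i\<in>{1..N}. x i \<in> {0..<a}} < card {i\<in>{1..N}. x i \<in> {0..<?b}}"
      by (rule psubset_card_mono[OF _ sub]) simp
    then have c1: "cnt a + 1 \<le> cnt ?b" unfolding cnt_def by simp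
    have d1: "\<bar>F ?b - cnt ?b / real N\<bar> \<le> D" unfolding D_def cnt_def by (rule sd_ge[OF b01])
    have "(cnt a + 1) / real N \<le> cnt ?b / real N" using c1 Npos by (intro divide_right_mono) simp_all
    moreover have "(cnt a + 1) / real N = cnt a / real N + 1 / real N" by (simp add: add_divide_distrib)
    ultimately have "cnt a / real N + 1 / real N \<le> cnt ?b / real N" by simp
    moreover have "F a - cnt a / real N \<le> D" using abs_le_D1[OF d0] .
    moreover have "- (F ?b - cnt ?b / real N) \<le> D" using abs_le_D2[OF d1] .
    ultimately show ?thesis by linarith
  qed
  have lim: "(\<lambda>n. 1 / real N - (F (a + 1/Suc n) - F a)) \<longlonglongrightarrow> 1 / real N - (F a - F a)"
  proof -
    have Fa: "(\<lambda>n. F (a + 1/Suc n)) \<longlonglongrightarrow> F a" by (rule F_RC) (use a01 na in auto)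
    show ?thesis by (intro tendsto_diff tendsto_const Fa)
  qed
  obtain n0 where n0: "1 / real (Suc n0) < 1 - a" using nat_approx_posE[of "1 - a"] j unfolding a_def by auto
  have ev: "\<forall>n\<ge>n0. 1 / real N - (F (a + 1/Suc n) - F a) \<le> 2 * D"
  proof (intro allI impI key)
    fix n assume "n0 \<le> n"
    then have "1/real (Suc n) \<le> 1/real (Suc n0)" by (intro divide_left_mono) (simp_all del: of_nat_Suc)
    then show "a + 1/Suc n \<le> 1" using n0 by simp
  qed
  have "1 / real N - (F a - F a) \<le> 2 * D" by (rule LIMSEQ_le_const2[OF lim]) (use ev in blast)
  then have "1 / real N \<le> 2 * D" by simp
  then show ?thesis unfolding D_def using Npos by (simp add: field_simps)
qed

end

lemma core:
  fixes c :: "nat \<Rightarrow> nat" assumes m: "m \<ge> 1"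
  shows "\<exists>n<2^m. \<exists>j<2^(m+2). \<bar>real (card {i. i<n \<and> c i < j}) - real n * real j / 2^(m+2)\<bar> \<ge> real m / 2000"
proof -
  interpret grid m c by unfold_locales (rule m)
  show ?thesis using exists_big unfolding E_def .
qed

context bpu begin

lemma schmidt_measure:
  assumes na: "\<And>y. y \<in> {0..1} \<Longrightarrow> measure M {y} = 0" and x: "\<And>k. x k \<in> {0..1}" and m: "m \<ge> 1"
  shows "\<exists>n. 1 \<le> n \<and> n < 2^m \<and> real n * star_disc M x n \<ge> real m / 2000"
proof -
  define G where "G = (2::real)^(m+2)"
  have Gpos: "G > 0" unfolding G_def by simp
  define c where "c i = nat \<lfloor>F (x (Suc i)) * G\<rfloor>" for i
  obtain n j where n: "n < 2^m" and j: "j < 2^(m+2)"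
    and big: "\<bar>real (card {i. i<n \<and> c i < j}) - real n * real j / 2^(m+2)\<bar> \<ge> real m / 2000"
    using core[OF m, of c] by blast
  define t where "t = real j / G"
  have t0: "0 \<le> t" unfolding t_def using Gpos by simp
  have t1: "t < 1"
  proof -
    have "real j < G" unfolding G_def using j by (metis of_nat_less_iff of_nat_numeral of_nat_power)
    then show ?thesis unfolding t_def using Gpos by simp
  qed
  obtain b where b01: "b \<in> {0..1}" and Fb: "F b = t" and biff: "\<And>y. y \<in> {0..1} \<Longrightarrow> y < b \<longleftrightarrow> F y < t"
    using find_b[OF na t0 t1] by blast
  have civ: "c k < j \<longleftrightarrow> F (x (Suc k)) < t" for k
  proof -
    have fl: "0 \<le> \<lfloor>F (x (Suc k)) * G\<rfloor>" using F_nonneg Gpos by simp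
    have "c k < j \<longleftrightarrow> \<lfloor>F (x (Suc k)) * G\<rfloor> < int j" unfolding c_def using fl by linarith
    also have "\<dots> \<longleftrightarrow> F (x (Suc k)) * G < real j" by (simp add: floor_less_iff)
    also have "\<dots> \<longleftrightarrow> F (x (Suc k)) < t" unfolding t_def using Gpos by (simp add: pos_less_divide_eq)
    finally show ?thesis .
  qed
  have seteq: "{i\<in>{1..n}. x i \<in> {0..<b}} = {i\<in>{1..n}. c (i - 1) < j}"
  proof (intro Collect_cong conj_cong refl)
    fix i assume "i \<in> {1..n}"
    then have si: "Suc (i - 1) = i" by simp
    have "x i \<in> {0..<b} \<longleftrightarrow> x i < b" using x[of i] by simp
    also have "\<dots> \<longleftrightarrow> F (x i) < t" using biff[OF x[of i]] .
    also have "\<dots> \<longleftrightarrow> c (i - 1) < j" using civ[of "i - 1"] unfolding si by simp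
    finally show "x i \<in> {0..<b} \<longleftrightarrow> c (i - 1) < j" .
  qed
  have cardeq: "card {i\<in>{1..n}. x i \<in> {0..<b}} = card {i. i<n \<and> c i < j}"
    unfolding seteq by (rule card_shift[of n "\<lambda>k. c k < j"])
  have "n \<noteq> 0"
  proof
    assume "n = 0"
    then have "\<bar>real (card {i. i<n \<and> c i < j}) - real n * real j / 2^(m+2)\<bar> = 0" by simp
    with big m show False by simp
  qed
  then have npos: "real n > 0" by simp
  have "\<bar>F b - real (card {i\<in>{1..n}. x i \<in> {0..<b}}) / real n\<bar> \<le> star_disc M x n" by (rule sd_ge[OF b01])
  then have A: "real n * \<bar>F b - real (card {i\<in>{1..n}. x i \<in> {0..<b}}) / real n\<bar> \<le> real n * star_disc M x n"
    using npos by (intro mult_left_mono) simp_all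
  have B: "real n * \<bar>F b - real (card {i\<in>{1..n}. x i \<in> {0..<b}}) / real n\<bar>
      = \<bar>real (card {i. i<n \<and> c i < j}) - real n * real j / 2^(m+2)\<bar>"
  proof -
    have "real n * \<bar>F b - real (card {i\<in>{1..n}. x i \<in> {0..<b}}) / real n\<bar>
        = \<bar>real n * (t - real (card {i. i<n \<and> c i < j}) / real n)\<bar>"
      unfolding Fb cardeq using npos by (simp add: abs_mult)
    also have "real n * (t - real (card {i. i<n \<and> c i < j}) / real n) = - (real (card {i. i<n \<and> c i < j}) - real n * real j / 2^(m+2))"
      unfolding t_def G_def using npos by (simp add: field_simps)
    finally show ?thesis by simp
  qed
  have "real m / 2000 \<le> real n * star_disc M x n" using A B big by linarith
  then show ?thesis using n \<open>n \<noteq> 0\<close> by (intro exI[of _ n]) auto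
qed

end

context bpu begin

lemma part3b:
  assumes noat: "\<And>y. y \<in> {0..1} \<Longrightarrow> measure M {y} = 0" and xr: "\<And>k. x k \<in> {0..1}"
  shows "\<exists>\<^sub>\<infinity>N. star_disc M x N \<ge> 1/2000 * ln (real N) / real N"
proof (rule ccontr)
  assume "\<not> ?thesis"
  then have "\<forall>\<^sub>\<infinity>n. \<not> star_disc M x n \<ge> 1/2000 * ln (real n) / real n" by (simp only: not_INFM)
  then have "\<exists>m. \<forall>n\<ge>m. \<not> star_disc M x n \<ge> 1/2000 * ln (real n) / real n" by (simp only: MOST_nat_le)
  then obtain N0 where N0: "\<And>n. n \<ge> N0 \<Longrightarrow> \<not> star_disc M x n \<ge> 1/2000 * ln (real n) / real n"
    by blast
  define m where "m = 2000 * N0 + 1"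
  have m1: "m \<ge> 1" unfolding m_def by simp
  have ex: "\<exists>n\<ge>1. n < 2^m \<and> real m / 2000 \<le> real n * star_disc M x n"
    apply (rule schmidt_measure)
      apply (erule noat)
     apply (rule xr)
    by (rule m1)
  then obtain n where n1: "1 \<le> n" and nm: "n < 2^m" and big: "real n * star_disc M x n \<ge> real m / 2000"
    by blast
  have npos: "real n > 0" using n1 by simp
  show False
  proof (cases "n < N0")
    case True
    have "real n * star_disc M x n \<le> real n * 1" using sd_le1 npos by (intro mult_left_mono) simp_all
    also have "\<dots> < real N0" using True by simp
    also have "\<dots> < real m / 2000" unfolding m_def by simp
    finally show False using big by simp
  next
    case False
    then have "star_disc M x n < 1/2000 * ln (real n) / real n" using N0 by (simp add: not_le)
    then have "real n * star_disc M x n < real n * (1/2000 * ln (real n) / real n)"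
      using npos by (intro mult_strict_left_mono) simp_all
    also have "\<dots> = ln (real n) / 2000" using npos by simp
    also have "\<dots> \<le> real m / 2000"
    proof -
      have "ln (real n) < ln ((2::real)^m)"
      proof (subst ln_less_cancel_iff)
        show "real n < 2^m" using nm by (metis of_nat_less_iff of_nat_numeral of_nat_power)
      qed (use npos in simp_all)
      also have "\<dots> = real m * ln 2" by (simp add: ln_realpow)
      also have "\<dots> \<le> real m" using ln_2_less_1 by (intro mult_left_le) simp_all
      finally show ?thesis by simp
    qed
    finally show False using big by simp
  qed
qed

end

theorem theorem3p2:
  fixes M :: "real measure"
  assumes "borel_prob_on_unit M"
  shows "(\<exists>c. \<forall>N\<ge>1. \<exists>x :: nat \<Rightarrow> real. (\<forall>i\<in>{1..N}. x i \<in> {0..1}) \<and> star_disc M x N \<le> c / real N)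
    \<and> (\<exists>(x :: nat \<Rightarrow> real) c. (\<forall>k. x k \<in> {0..1}) \<and>
          (\<forall>N\<ge>2. star_disc M x N \<le> c * ln (real N) / real N))
    \<and> ((\<forall>y\<in>{0..1}. measure M {y} = 0) \<longrightarrow>
          (\<forall>N\<ge>1. \<forall>x :: nat \<Rightarrow> real. (\<forall>i\<in>{1..N}. x i \<in> {0..1}) \<longrightarrow>
               star_disc M x N \<ge> 1 / (2 * real N))
        \<and> (\<exists>c>0. \<forall>x :: nat \<Rightarrow> real. (\<forall>k. x k \<in> {0..1}) \<longrightarrow>
               (\<exists>\<^sub>\<infinity>N. star_disc M x N \<ge> c * ln (real N) / real N)))"
proof -
  interpret bpu M by unfold_locales (rule assms)
  have P1: "\<exists>c. \<forall>N\<ge>1. \<exists>x :: nat \<Rightarrow> real. (\<forall>i\<in>{1..N}. x i \<in> {0..1}) \<and> star_disc M x N \<le> c / real N"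
  proof (intro exI[of _ 1] allI impI)
    fix N :: nat assume N: "N \<ge> 1"
    define v where "v i = real (i - 1) / real N" for i
    have v0: "0 \<le> v i" for i unfolding v_def by simp
    show "\<exists>x :: nat \<Rightarrow> real. (\<forall>i\<in>{1..N}. x i \<in> {0..1}) \<and> star_disc M x N \<le> 1 / real N"
    proof (intro exI[of _ "\<lambda>i. Q (v i)"] conjI ballI)
      fix i show "Q (v i) \<in> {0..1}" using Q_range[OF v0] by simp
    next
      show "star_disc M (\<lambda>i. Q (v i)) N \<le> 1 / real N"
        by (rule transfer_upper) (use v0 grid_bound[OF N] in \<open>simp_all add: v_def\<close>)
    qed
  qed
  have P2: "\<exists>(x :: nat \<Rightarrow> real) c. (\<forall>k. x k \<in> {0..1}) \<and> (\<forall>N\<ge>2. star_disc M x N \<le> c * ln (real N) / real N)"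
  proof (intro exI[of _ "\<lambda>k. Q (vdc (k - 1))"] exI[of _ "2 / ln 2"] conjI allI impI)
    fix k :: nat show "Q (vdc (k - 1)) \<in> {0..1}" using Q_range[of "vdc (k - 1)"] vdc_range by simp
  next
    fix N :: nat assume N: "N \<ge> 2"
    show "star_disc M (\<lambda>k. Q (vdc (k - 1))) N \<le> (2 / ln 2) * ln (real N) / real N"
      by (rule transfer_upper) (use vdc_range vdc_bound[OF N] in auto)
  qed
  have P3: "(\<forall>y\<in>{0..1}. measure M {y} = 0) \<longrightarrow>
          (\<forall>N\<ge>1. \<forall>x :: nat \<Rightarrow> real. (\<forall>i\<in>{1..N}. x i \<in> {0..1}) \<longrightarrow>
               star_disc M x N \<ge> 1 / (2 * real N))
        \<and> (\<exists>c>0. \<forall>x :: nat \<Rightarrow> real. (\<forall>k. x k \<in> {0..1}) \<longrightarrow>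
               (\<exists>\<^sub>\<infinity>N. star_disc M x N \<ge> c * ln (real N) / real N))"
  proof (intro impI conjI)
    assume na: "\<forall>y\<in>{0..1}. measure M {y} = 0"
    show "\<forall>N\<ge>1. \<forall>x :: nat \<Rightarrow> real. (\<forall>i\<in>{1..N}. x i \<in> {0..1}) \<longrightarrow> star_disc M x N \<ge> 1 / (2 * real N)"
    proof (intro allI impI)
      fix N :: nat and x :: "nat \<Rightarrow> real"
      assume "N \<ge> 1" "\<forall>i\<in>{1..N}. x i \<in> {0..1}"
      then show "star_disc M x N \<ge> 1 / (2 * real N)"
        using lower_half[of N x] na by auto
    qed
  next
    assume na: "\<forall>y\<in>{0..1}. measure M {y} = 0"
    show "\<exists>c>0. \<forall>x :: nat \<Rightarrow> real. (\<forall>k. x k \<in> {0..1}) \<longrightarrow> (\<exists>\<^sub>\<infinity>N. star_disc M x N \<ge> c * ln (real N) / real N)"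
      using part3b na by (intro exI[of _ "1/2000"]) auto
  qed
  show ?thesis using P1 P2 P3 by blast
qed

end
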